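(* For every positive integer $n$ there is a DAG $G_n$ with $3n$ vertices whose underlying graph is 3-connected, such that $G_n$ is upward-planar, every vertex of $G_n$ has degree at most four, every directed path in $G_n$ has length at most five, and $\mathrm{span}(G_n)\ge n/2$.
   Context: A DAG is a directed acyclic graph. An upward-planar layered drawing of a DAG $G$ maps each vertex $v$ to a point in the plane whose y-coordinate $y(v)$ is an integer, and each edge $(u,v)$ (directed from its tail $u$ to its head $v$) to a strictly y-monotone curve going upward from $u$ to $v$ (so $y(u)<y(v)$), such that no two edges intersect except at common endpoints. $G$ is upward-planar if it has such a drawing. The span of an edge $(u,v)$ in such a drawing $\Gamma$ is $y(v)-y(u)$; the span of $\Gamma$ is the maximum span of its edges; $\mathrm{span}(G)$ is the minimum span over all upward-planar layered drawings of $G$. The degree of a vertex is its total number of incident edges. The length of a directed path is its number of edges. *)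

theory Defs
  imports "HOL-Analysis.Analysis"
begin

definition is_dag :: "'a set \<Rightarrow> ('a \<times> 'a) set \<Rightarrow> bool" where
  "is_dag V E \<longleftrightarrow> finite V \<and> E \<subseteq> V \<times> V \<and> acyclic E"

definition und_adj :: "('a \<times> 'a) set \<Rightarrow> 'a \<Rightarrow> 'a \<Rightarrow> bool" where
  "und_adj E u v \<longleftrightarrow> (u, v) \<in> E \<or> (v, u) \<in> E"

definition und_connected_on :: "('a \<times> 'a) set \<Rightarrow> 'a set \<Rightarrow> bool" where
  "und_connected_on E W \<longleftrightarrow>
     (\<forall>a\<in>W. \<forall>b\<in>W. (a, b) \<in> {(u, v). u \<in> W \<and> v \<in> W \<and> und_adj E u v}\<^sup>*)"

definition three_connected :: "'a set \<Rightarrow> ('a \<times> 'a) set \<Rightarrow> bool" where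
  "three_connected V E \<longleftrightarrow> card V \<ge> 3 \<and>
     (\<forall>S \<subseteq> V. card S \<le> 2 \<longrightarrow> und_connected_on E (V - S))"

definition degree :: "('a \<times> 'a) set \<Rightarrow> 'a \<Rightarrow> nat" where
  "degree E v = card {e \<in> E. fst e = v \<or> snd e = v}"

text \<open>Directed path as a list of distinct vertices; its length is the number of edges.\<close>
definition dir_path :: "'a set \<Rightarrow> ('a \<times> 'a) set \<Rightarrow> 'a list \<Rightarrow> bool" where
  "dir_path V E xs \<longleftrightarrow> xs \<noteq> [] \<and> distinct xs \<and> set xs \<subseteq> V \<and>
     (\<forall>i. Suc i < length xs \<longrightarrow> (xs ! i, xs ! Suc i) \<in> E)"

definition updraw_point :: "('a \<Rightarrow> real) \<Rightarrow> ('a \<Rightarrow> int) \<Rightarrow> 'a \<Rightarrow> real \<times> real" where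
  "updraw_point xp y v = (xp v, real_of_int (y v))"

definition upward_planar_layered_drawing ::
  "'a set \<Rightarrow> ('a \<times> 'a) set \<Rightarrow> ('a \<Rightarrow> real) \<Rightarrow> ('a \<Rightarrow> int)
     \<Rightarrow> ('a \<times> 'a \<Rightarrow> real \<Rightarrow> real \<times> real) \<Rightarrow> bool" where
  "upward_planar_layered_drawing V E xp y c \<longleftrightarrow>
     inj_on (updraw_point xp y) V \<and>
     (\<forall>e\<in>E. continuous_on {0..1} (c e) \<and>
        c e 0 = updraw_point xp y (fst e) \<and> c e 1 = updraw_point xp y (snd e) \<and>
        (\<forall>s t. 0 \<le> s \<longrightarrow> s < t \<longrightarrow> t \<le> 1 \<longrightarrow> snd (c e s) < snd (c e t))) \<and>
     (\<forall>e\<in>E. \<forall>t. 0 < t \<longrightarrow> t < 1 \<longrightarrow> (\<forall>w\<in>V. c e t \<noteq> updraw_point xp y w)) \<and>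
     (\<forall>e\<in>E. \<forall>f\<in>E. e \<noteq> f \<longrightarrow> (\<forall>s t. 0 \<le> s \<longrightarrow> s \<le> 1 \<longrightarrow> 0 \<le> t \<longrightarrow> t \<le> 1 \<longrightarrow>
        c e s = c f t \<longrightarrow>
        (\<exists>w. (w = fst e \<or> w = snd e) \<and> (w = fst f \<or> w = snd f) \<and>
             c e s = updraw_point xp y w)))"

definition upward_planar :: "'a set \<Rightarrow> ('a \<times> 'a) set \<Rightarrow> bool" where
  "upward_planar V E \<longleftrightarrow> (\<exists>xp y c. upward_planar_layered_drawing V E xp y c)"

definition drawing_span :: "('a \<times> 'a) set \<Rightarrow> ('a \<Rightarrow> int) \<Rightarrow> int" where
  "drawing_span E y = Max (insert 0 ((\<lambda>(u, v). y v - y u) ` E))"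

definition graph_span :: "'a set \<Rightarrow> ('a \<times> 'a) set \<Rightarrow> nat" where
  "graph_span V E = (LEAST k::nat. \<exists>xp y c. upward_planar_layered_drawing V E xp y c \<and>
                                      drawing_span E y = int k)"

end

theory Submission
  imports Defs
begin


locale drawing =
  fixes V :: "'a set" and E :: "('a \<times> 'a) set" and xp :: "'a \<Rightarrow> real" and y :: "'a \<Rightarrow> int"
    and c :: "'a \<times> 'a \<Rightarrow> real \<Rightarrow> real \<times> real"
  assumes D: "upward_planar_layered_drawing V E xp y c"
begin

abbreviation "yr v \<equiv> real_of_int (y v)"

lemma P_eq: "updraw_point xp y v = (xp v, yr v)" by (simp add: updraw_point_def)

lemma inj: "inj_on (updraw_point xp y) V" using D unfolding upward_planar_layered_drawing_def by auto

lemma cont: "e \<in> E \<Longrightarrow> continuous_on {0..1} (c e)"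
  using D unfolding upward_planar_layered_drawing_def by auto
lemma c0: "e \<in> E \<Longrightarrow> c e 0 = (xp (fst e), yr (fst e))"
  using D unfolding upward_planar_layered_drawing_def by (auto simp: P_eq)
lemma c1: "e \<in> E \<Longrightarrow> c e 1 = (xp (snd e), yr (snd e))"
  using D unfolding upward_planar_layered_drawing_def by (auto simp: P_eq)
lemma mono: "e \<in> E \<Longrightarrow> 0 \<le> s \<Longrightarrow> s < t \<Longrightarrow> t \<le> 1 \<Longrightarrow> snd (c e s) < snd (c e t)"
  using D unfolding upward_planar_layered_drawing_def by auto
lemma novert: "e \<in> E \<Longrightarrow> 0 < t \<Longrightarrow> t < 1 \<Longrightarrow> w \<in> V \<Longrightarrow> c e t \<noteq> (xp w, yr w)"
  using D unfolding upward_planar_layered_drawing_def by (auto simp: P_eq)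
lemma cross: "e \<in> E \<Longrightarrow> f \<in> E \<Longrightarrow> e \<noteq> f \<Longrightarrow> 0 \<le> s \<Longrightarrow> s \<le> 1 \<Longrightarrow> 0 \<le> t \<Longrightarrow> t \<le> 1 \<Longrightarrow>
   c e s = c f t \<Longrightarrow> \<exists>w. (w = fst e \<or> w = snd e) \<and> (w = fst f \<or> w = snd f) \<and> c e s = (xp w, yr w)"
  using D unfolding upward_planar_layered_drawing_def by (auto simp: P_eq)

lemma edge_up: "(u,v) \<in> E \<Longrightarrow> y u < y v"
proof -
  assume e: "(u,v) \<in> E"
  have "snd (c (u,v) 0) < snd (c (u,v) 1)" by (rule mono[OF e]) auto
  thus ?thesis using c0[OF e] c1[OF e] by simp
qed

lemma inj_pt: "u \<in> V \<Longrightarrow> w \<in> V \<Longrightarrow> xp u = xp w \<Longrightarrow> y u = y w \<Longrightarrow> u = w"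
  using inj unfolding inj_on_def P_eq by auto

definition tpar :: "'a \<times> 'a \<Rightarrow> real \<Rightarrow> real" where
  "tpar e h = (THE t. 0 \<le> t \<and> t \<le> 1 \<and> snd (c e t) = h)"
definition X :: "'a \<times> 'a \<Rightarrow> real \<Rightarrow> real" where "X e h = fst (c e (tpar e h))"

lemma snd_cont: "e \<in> E \<Longrightarrow> continuous_on {0..1} (\<lambda>t. snd (c e t))"
  by (intro continuous_intros cont)

lemma tpar_unique: "e \<in> E \<Longrightarrow> 0 \<le> s \<Longrightarrow> s \<le> 1 \<Longrightarrow> 0 \<le> t \<Longrightarrow> t \<le> 1 \<Longrightarrow> snd (c e s) = snd (c e t) \<Longrightarrow> s = t"
  by (metis less_irrefl linorder_neqE_linordered_idom mono)

lemma tpar_ex: assumes e: "(u,v) \<in> E" and h: "yr u \<le> h" "h \<le> yr v"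
  shows "\<exists>t. 0 \<le> t \<and> t \<le> 1 \<and> snd (c (u,v) t) = h"
proof -
  have "snd (c (u,v) 0) \<le> h" "h \<le> snd (c (u,v) 1)" using c0[OF e] c1[OF e] h by auto
  from IVT'[of "\<lambda>t. snd (c (u,v) t)", OF this _ snd_cont[OF e]] show ?thesis by auto
qed

lemma tpar: assumes e: "(u,v) \<in> E" and h: "yr u \<le> h" "h \<le> yr v"
  shows "0 \<le> tpar (u,v) h \<and> tpar (u,v) h \<le> 1 \<and> snd (c (u,v) (tpar (u,v) h)) = h"
proof -
  obtain t where t: "0 \<le> t \<and> t \<le> 1 \<and> snd (c (u,v) t) = h" using tpar_ex[OF e h] by blast
  have "tpar (u,v) h = t" unfolding tpar_def
    by (rule the_equality) (use t tpar_unique[OF e] in auto)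
  thus ?thesis using t by simp
qed

lemma c_tpar: assumes e: "(u,v) \<in> E" and h: "yr u \<le> h" "h \<le> yr v"
  shows "c (u,v) (tpar (u,v) h) = (X (u,v) h, h)"
  using tpar[OF e h] unfolding X_def by (metis prod.collapse)

lemma tpar_c: assumes e: "e \<in> E" and t: "0 \<le> t" "t \<le> 1"
  shows "tpar e (snd (c e t)) = t"
  unfolding tpar_def by (rule the_equality) (use t tpar_unique[OF e] in auto)

lemma tpar_lo: assumes e: "(u,v) \<in> E" shows "tpar (u,v) (yr u) = 0"
  using tpar_c[OF e, of 0] c0[OF e] by simp
lemma tpar_hi: assumes e: "(u,v) \<in> E" shows "tpar (u,v) (yr v) = 1"
  using tpar_c[OF e, of 1] c1[OF e] by simp

lemma X_lo: "(u,v) \<in> E \<Longrightarrow> X (u,v) (yr u) = xp u"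
  unfolding X_def using tpar_lo c0 by simp
lemma X_hi: "(u,v) \<in> E \<Longrightarrow> X (u,v) (yr v) = xp v"
  unfolding X_def using tpar_hi c1 by simp

lemma tpar_interior: assumes e: "(u,v) \<in> E" and h: "yr u < h" "h < yr v"
  shows "0 < tpar (u,v) h \<and> tpar (u,v) h < 1"
proof -
  have t: "0 \<le> tpar (u,v) h \<and> tpar (u,v) h \<le> 1 \<and> snd (c (u,v) (tpar (u,v) h)) = h"
    using tpar[OF e] h by auto
  have "tpar (u,v) h \<noteq> 0" using t c0[OF e] h by auto
  moreover have "tpar (u,v) h \<noteq> 1" using t c1[OF e] h by auto
  ultimately show ?thesis using t by auto
qed

lemma image_snd: assumes e: "(u,v) \<in> E"
  shows "(\<lambda>t. snd (c (u,v) t)) ` {0..1} = {yr u..yr v}"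
proof
  show "(\<lambda>t. snd (c (u,v) t)) ` {0..1} \<subseteq> {yr u..yr v}"
  proof
    fix z assume "z \<in> (\<lambda>t. snd (c (u,v) t)) ` {0..1}"
    then obtain t where t: "0 \<le> t" "t \<le> 1" "z = snd (c (u,v) t)" by auto
    have "snd (c (u,v) 0) \<le> z"
      using t mono[OF e, of 0 t] by (cases "t = 0") (auto simp: less_imp_le)
    moreover have "z \<le> snd (c (u,v) 1)"
      using t mono[OF e, of t 1] by (cases "t = 1") (auto simp: less_imp_le)
    ultimately show "z \<in> {yr u..yr v}" using c0[OF e] c1[OF e] by auto
  qed
  show "{yr u..yr v} \<subseteq> (\<lambda>t. snd (c (u,v) t)) ` {0..1}"
  proof
    fix z assume "z \<in> {yr u..yr v}"
    then obtain t where "0 \<le> t \<and> t \<le> 1 \<and> snd (c (u,v) t) = z" using tpar_ex[OF e] by auto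
    thus "z \<in> (\<lambda>t. snd (c (u,v) t)) ` {0..1}" by (auto intro!: rev_image_eqI)
  qed
qed

lemma tpar_cont: assumes e: "(u,v) \<in> E"
  shows "continuous_on {yr u..yr v} (tpar (u,v))"
  using continuous_on_inv[OF snd_cont[OF e] compact_Icc, of "tpar (u,v)"] tpar_c[OF e] image_snd[OF e]
  by auto

lemma X_cont: assumes e: "(u,v) \<in> E"
  shows "continuous_on {yr u..yr v} (X (u,v))"
proof -
  have sub: "tpar (u,v) ` {yr u..yr v} \<subseteq> {0..1}" using tpar[OF e] by auto
  have "continuous_on {yr u..yr v} (c (u,v) \<circ> tpar (u,v))"
    by (rule continuous_on_compose[OF tpar_cont[OF e] continuous_on_subset[OF cont[OF e] sub]])
  from continuous_on_fst[OF this] show ?thesis unfolding X_def o_def .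
qed

lemma X_cross:
  assumes e: "(u,v) \<in> E" and f: "(u',v') \<in> E" and ne: "(u,v) \<noteq> (u',v')"
    and h: "yr u \<le> h" "h \<le> yr v" "yr u' \<le> h" "h \<le> yr v'"
    and eq: "X (u,v) h = X (u',v') h"
  shows "\<exists>w. (w = u \<or> w = v) \<and> (w = u' \<or> w = v') \<and> xp w = X (u,v) h \<and> yr w = h"
proof -
  have "c (u,v) (tpar (u,v) h) = c (u',v') (tpar (u',v') h)"
    using c_tpar[OF e h(1,2)] c_tpar[OF f h(3,4)] eq by simp
  from cross[OF e f ne _ _ _ _ this] tpar[OF e h(1,2)] tpar[OF f h(3,4)]
  obtain w where "(w = u \<or> w = v) \<and> (w = u' \<or> w = v') \<and> c (u,v) (tpar (u,v) h) = (xp w, yr w)"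
    by auto
  thus ?thesis using c_tpar[OF e h(1,2)] by auto
qed

lemma X_novert:
  assumes e: "(u,v) \<in> E" and h: "yr u < h" "h < yr v" and w: "w \<in> V"
  shows "\<not> (xp w = X (u,v) h \<and> yr w = h)"
proof
  assume a: "xp w = X (u,v) h \<and> yr w = h"
  have "c (u,v) (tpar (u,v) h) = (xp w, yr w)" using c_tpar[OF e] h a by auto
  with novert[OF e _ _ w] tpar_interior[OF e h] show False by auto
qed

definition XP :: "'a \<Rightarrow> 'a \<Rightarrow> 'a \<Rightarrow> real \<Rightarrow> real" where
  "XP s p t h = (if h \<le> yr p then X (s,p) h else X (p,t) h)"

lemma XP_cont: assumes e1: "(s,p) \<in> E" and e2: "(p,t) \<in> E"
  shows "continuous_on {yr s..yr t} (XP s p t)"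
proof -
  have sp: "yr s < yr p" "yr p < yr t" using edge_up[OF e1] edge_up[OF e2] by auto
  have "continuous_on {yr s..yr t} (\<lambda>h. if id h \<le> yr p then X (s,p) h else X (p,t) h)"
  proof (rule continuous_on_cases_le)
    show "continuous_on {h \<in> {yr s..yr t}. id h \<le> yr p} (X (s, p))"
      by (rule continuous_on_subset[OF X_cont[OF e1]]) auto
    show "continuous_on {h \<in> {yr s..yr t}. yr p \<le> id h} (X (p, t))"
      by (rule continuous_on_subset[OF X_cont[OF e2]]) auto
    show "continuous_on {yr s..yr t} id" by (rule continuous_on_id')
    show "\<And>h. h \<in> {yr s..yr t} \<Longrightarrow> id h = yr p \<Longrightarrow> X (s, p) h = X (p, t) h"
      using X_hi[OF e1] X_lo[OF e2] by auto
  qed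
  thus ?thesis unfolding XP_def by simp
qed

lemma XP_lo: "(s,p) \<in> E \<Longrightarrow> (p,t) \<in> E \<Longrightarrow> XP s p t (yr s) = xp s"
  unfolding XP_def using edge_up[of s p] X_lo[of s p] by auto
lemma XP_hi: "(s,p) \<in> E \<Longrightarrow> (p,t) \<in> E \<Longrightarrow> XP s p t (yr t) = xp t"
  unfolding XP_def using edge_up[of s p] edge_up[of p t] X_hi[of p t] by auto
lemma XP_mid: "(s,p) \<in> E \<Longrightarrow> (p,t) \<in> E \<Longrightarrow> XP s p t (yr p) = xp p"
  unfolding XP_def using X_hi[of s p] by auto

lemma XP_on: assumes e1: "(s,p) \<in> E" and e2: "(p,t) \<in> E" and h: "yr s \<le> h" "h \<le> yr t"
  shows "\<exists>a b. (a,b) \<in> E \<and> ((a = s \<and> b = p) \<or> (a = p \<and> b = t)) \<and> yr a \<le> h \<and> h \<le> yr b \<and> XP s p t h = X (a,b) h"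
proof (cases "h \<le> yr p")
  case True thus ?thesis using e1 h unfolding XP_def by (intro exI[of _ s] exI[of _ p]) auto
next
  case False thus ?thesis using e2 h unfolding XP_def by (intro exI[of _ p] exI[of _ t]) auto
qed

lemma lens_sep:
  assumes e: "(s,p) \<in> E" "(p,t) \<in> E" "(s,q) \<in> E" "(q,t) \<in> E" and pq: "p \<noteq> q"
    and h: "yr s < h" "h < yr t"
  shows "XP s p t h \<noteq> XP s q t h"
proof
  assume eq: "XP s p t h = XP s q t h"
  have h': "yr s \<le> h" "h \<le> yr t" using h by auto
  from XP_on[OF e(1,2) h'] obtain a b where ab: "(a,b) \<in> E" "(a = s \<and> b = p) \<or> (a = p \<and> b = t)" "yr a \<le> h" "h \<le> yr b"
    "XP s p t h = X (a,b) h" by blast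
  from XP_on[OF e(3,4) h'] obtain a' b' where ab': "(a',b') \<in> E" "(a' = s \<and> b' = q) \<or> (a' = q \<and> b' = t)" "yr a' \<le> h" "h \<le> yr b'"
    "XP s q t h = X (a',b') h" by blast
  have ys: "y s < y p" "y p < y t" "y s < y q" "y q < y t" using edge_up e by blast+
  have ne: "(a,b) \<noteq> (a',b')" using ab(2) ab'(2) pq ys by auto
  have "X (a,b) h = X (a',b') h" using eq ab(5) ab'(5) by simp
  from X_cross[OF ab(1) ab'(1) ne ab(3,4) ab'(3,4) this]
  obtain w where w: "(w = a \<or> w = b) \<and> (w = a' \<or> w = b') \<and> yr w = h" by blast
  show False using w ab(2) ab'(2) pq h ys by auto
qed

lemma ivt_up: fixes \<phi> :: "real \<Rightarrow> real"
  assumes c: "continuous_on {a..b} \<phi>" and ab: "a \<le> b" and pa: "\<phi> a > 0" and nz: "\<forall>h. a \<le> h \<and> h < b \<longrightarrow> \<phi> h \<noteq> 0"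
  shows "\<phi> b \<ge> 0"
proof (rule ccontr)
  assume nb: "\<not> \<phi> b \<ge> 0"
  have 1: "\<phi> b \<le> 0" "0 \<le> \<phi> a" using nb pa by auto
  from IVT2'[of \<phi> b 0 a, OF 1 ab c] obtain x where x: "a \<le> x" "x \<le> b" "\<phi> x = 0" by blast
  have "x \<noteq> b" using x(3) nb by auto
  hence "x < b" using x(2) by simp
  with x(1,3) nz show False by blast
qed

lemma ivt_down: fixes \<phi> :: "real \<Rightarrow> real"
  assumes c: "continuous_on {a..b} \<phi>" and ab: "a \<le> b" and pb: "\<phi> b > 0" and nz: "\<forall>h. a < h \<and> h \<le> b \<longrightarrow> \<phi> h \<noteq> 0"
  shows "\<phi> a \<ge> 0"
proof (rule ccontr)
  assume na: "\<not> \<phi> a \<ge> 0"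
  have 1: "\<phi> a \<le> 0" "0 \<le> \<phi> b" using na pb by auto
  from IVT'[of \<phi> a 0 b, OF 1 ab c] obtain x where x: "a \<le> x" "x \<le> b" "\<phi> x = 0" by blast
  have "x \<noteq> a" using x(3) na by auto
  hence "a < x" using x(1) by simp
  with x(2,3) nz show False by blast
qed

lemma const_sign: fixes \<phi> :: "real \<Rightarrow> real"
  assumes c: "continuous_on {a..b} \<phi>" and nz: "\<forall>h. a \<le> h \<and> h \<le> b \<longrightarrow> \<phi> h \<noteq> 0"
    and x1: "a \<le> x1" "x1 \<le> b" and x2: "a \<le> x2" "x2 \<le> b" and p: "\<phi> x1 > 0"
  shows "\<phi> x2 > 0"
proof (rule ccontr)
  assume n: "\<not> \<phi> x2 > 0"
  have n2: "\<phi> x2 \<le> 0" using n by simp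
  show False
  proof (cases "x1 \<le> x2")
    case True
    have sub: "{x1..x2} \<subseteq> {a..b}" using x1 x2 by auto
    have 1: "\<phi> x2 \<le> 0" "0 \<le> \<phi> x1" using n2 p by auto
    from IVT2'[of \<phi> x2 0 x1, OF 1 True continuous_on_subset[OF c sub]]
    obtain x where "x1 \<le> x" "x \<le> x2" "\<phi> x = 0" by blast
    thus False using nz x1 x2 by force
  next
    case False
    hence le: "x2 \<le> x1" by simp
    have sub: "{x2..x1} \<subseteq> {a..b}" using x1 x2 by auto
    have 1: "\<phi> x2 \<le> 0" "0 \<le> \<phi> x1" using n2 p by auto
    from IVT'[of \<phi> x2 0 x1, OF 1 le continuous_on_subset[OF c sub]]
    obtain x where "x2 \<le> x" "x \<le> x1" "\<phi> x = 0" by blast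
    thus False using nz x1 x2 by force
  qed
qed

definition inside :: "'a \<Rightarrow> 'a \<Rightarrow> 'a \<Rightarrow> 'a \<Rightarrow> real \<Rightarrow> real \<Rightarrow> bool" where
  "inside s p q t x h \<longleftrightarrow> yr s < h \<and> h < yr t \<and>
     (XP s p t h < x \<and> x < XP s q t h \<or> XP s q t h < x \<and> x < XP s p t h)"

lemma inside_sym: "inside s p q t x h = inside s q p t x h"
  unfolding inside_def by auto


lemma off_path:
  assumes e1: "(s,p) \<in> E" and e2: "(p,t) \<in> E" and e: "(u1,u2) \<in> E"
    and nl: "u1 \<notin> {s,p,t}" "u2 \<notin> {s,p,t}"
    and h: "yr u1 \<le> h" "h \<le> yr u2" "yr s \<le> h" "h \<le> yr t"
  shows "X (u1,u2) h \<noteq> XP s p t h"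
proof
  assume eq: "X (u1,u2) h = XP s p t h"
  from XP_on[OF e1 e2 h(3,4)] obtain a b where ab: "(a,b) \<in> E" "(a = s \<and> b = p) \<or> (a = p \<and> b = t)"
    "yr a \<le> h" "h \<le> yr b" "XP s p t h = X (a,b) h" by blast
  have ne: "(u1,u2) \<noteq> (a,b)" using ab(2) nl by auto
  have "X (u1,u2) h = X (a,b) h" using eq ab(5) by simp
  from X_cross[OF e ab(1) ne h(1,2) ab(3,4) this]
  obtain w where "(w = u1 \<or> w = u2) \<and> (w = a \<or> w = b)" by blast
  thus False using ab(2) nl by auto
qed

lemma trap0:
  assumes l: "(s,p) \<in> E" "(p,t) \<in> E" "(s,q) \<in> E" "(q,t) \<in> E"
    and e: "(u1,u2) \<in> E" and nl: "u1 \<notin> {s,p,q,t}" "u2 \<notin> {s,p,q,t}"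
    and V: "u1 \<in> V" "u2 \<in> V" "s \<in> V" "t \<in> V"
    and v: "v = u1 \<or> v = u2" and w: "w = u1 \<or> w = u2"
    and ins: "yr s < yr v" "yr v < yr t" "XP s p t (yr v) < xp v" "xp v < XP s q t (yr v)"
  shows "yr s < yr w \<and> yr w < yr t \<and> XP s p t (yr w) < xp w \<and> xp w < XP s q t (yr w)"
proof -
  define g where "g = X (u1,u2)"
  define F where "F = XP s p t"
  define G where "G = XP s q t"
  have lohi: "yr u1 < yr u2" using edge_up[OF e] by simp
  have gc: "continuous_on {yr u1..yr u2} g" unfolding g_def by (rule X_cont[OF e])
  have Fc: "continuous_on {yr s..yr t} F" unfolding F_def by (rule XP_cont[OF l(1,2)])
  have Gc: "continuous_on {yr s..yr t} G" unfolding G_def by (rule XP_cont[OF l(3,4)])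
  have gv: "g (yr v) = xp v" "g (yr w) = xp w" using v w X_lo[OF e] X_hi[OF e] unfolding g_def by auto
  have hv: "yr u1 \<le> yr v" "yr v \<le> yr u2" "yr u1 \<le> yr w" "yr w \<le> yr u2" using v w lohi by auto
  have nlp: "u1 \<notin> {s,p,t}" "u2 \<notin> {s,p,t}" using nl by auto
  have nlq: "u1 \<notin> {s,q,t}" "u2 \<notin> {s,q,t}" using nl by auto
  have A: "g h \<noteq> F h \<and> g h \<noteq> G h" if "yr u1 \<le> h" "h \<le> yr u2" "yr s \<le> h" "h \<le> yr t" for h
    using off_path[OF l(1,2) e nlp that] off_path[OF l(3,4) e nlq that] unfolding g_def F_def G_def by auto
  have B: "yr u2 < yr t"
  proof (rule ccontr)
    assume "\<not> yr u2 < yr t"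
    hence tu: "yr t \<le> yr u2" by simp
    have sub1: "{yr v..yr t} \<subseteq> {yr u1..yr u2}" using hv tu by auto
    have sub2: "{yr v..yr t} \<subseteq> {yr s..yr t}" using ins by auto
    have c1: "continuous_on {yr v..yr t} (\<lambda>h. g h - F h)"
      by (intro continuous_intros continuous_on_subset[OF gc sub1] continuous_on_subset[OF Fc sub2])
    have c2: "continuous_on {yr v..yr t} (\<lambda>h. G h - g h)"
      by (intro continuous_intros continuous_on_subset[OF gc sub1] continuous_on_subset[OF Gc sub2])
    have nzB: "\<forall>h. yr v \<le> h \<and> h < yr t \<longrightarrow> g h \<noteq> F h \<and> g h \<noteq> G h"
    proof (intro allI impI)
      fix h assume "yr v \<le> h \<and> h < yr t"
      thus "g h \<noteq> F h \<and> g h \<noteq> G h" using hv tu ins by (intro A) auto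
    qed
    have "(\<lambda>h. g h - F h) (yr t) \<ge> 0"
      by (rule ivt_up[OF c1]) (use ins gv nzB in \<open>auto simp: F_def\<close>)
    moreover have "(\<lambda>h. G h - g h) (yr t) \<ge> 0"
      by (rule ivt_up[OF c2]) (use ins gv nzB in \<open>auto simp: G_def\<close>)
    moreover have "F (yr t) = xp t" "G (yr t) = xp t"
      unfolding F_def G_def using XP_hi l by auto
    ultimately have gt: "g (yr t) = xp t" by simp
    show False
    proof (cases "yr t < yr u2")
      case True
      have "yr u1 < yr t" using hv ins by simp
      from X_novert[OF e this True V(4)] gt show False unfolding g_def by simp
    next
      case False
      hence "yr t = yr u2" using tu by simp
      hence "y t = y u2" "xp t = xp u2" using gt X_hi[OF e] unfolding g_def by auto
      hence "u2 = t" using inj_pt[OF V(2) V(4)] by simp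
      thus False using nl by simp
    qed
  qed
  have C: "yr s < yr u1"
  proof (rule ccontr)
    assume "\<not> yr s < yr u1"
    hence su: "yr u1 \<le> yr s" by simp
    have sub1: "{yr s..yr v} \<subseteq> {yr u1..yr u2}" using hv su by auto
    have sub2: "{yr s..yr v} \<subseteq> {yr s..yr t}" using ins by auto
    have c1: "continuous_on {yr s..yr v} (\<lambda>h. g h - F h)"
      by (intro continuous_intros continuous_on_subset[OF gc sub1] continuous_on_subset[OF Fc sub2])
    have c2: "continuous_on {yr s..yr v} (\<lambda>h. G h - g h)"
      by (intro continuous_intros continuous_on_subset[OF gc sub1] continuous_on_subset[OF Gc sub2])
    have nzC: "\<forall>h. yr s < h \<and> h \<le> yr v \<longrightarrow> g h \<noteq> F h \<and> g h \<noteq> G h"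
    proof (intro allI impI)
      fix h assume "yr s < h \<and> h \<le> yr v"
      thus "g h \<noteq> F h \<and> g h \<noteq> G h" using hv su ins by (intro A) auto
    qed
    have "(\<lambda>h. g h - F h) (yr s) \<ge> 0"
      by (rule ivt_down[OF c1]) (use ins gv nzC in \<open>auto simp: F_def\<close>)
    moreover have "(\<lambda>h. G h - g h) (yr s) \<ge> 0"
      by (rule ivt_down[OF c2]) (use ins gv nzC in \<open>auto simp: G_def\<close>)
    moreover have "F (yr s) = xp s" "G (yr s) = xp s"
      unfolding F_def G_def using XP_lo l by auto
    ultimately have gs: "g (yr s) = xp s" by simp
    show False
    proof (cases "yr u1 < yr s")
      case True
      have "yr s < yr u2" using hv ins by simp
      from X_novert[OF e True this V(3)] gs show False unfolding g_def by simp
    next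
      case False
      hence "yr s = yr u1" using su by simp
      hence "y s = y u1" "xp s = xp u1" using gs X_lo[OF e] unfolding g_def by auto
      hence "u1 = s" using inj_pt[OF V(1) V(3)] by simp
      thus False using nl by simp
    qed
  qed
  have sub3: "{yr u1..yr u2} \<subseteq> {yr s..yr t}" using B C by auto
  have c1: "continuous_on {yr u1..yr u2} (\<lambda>h. g h - F h)"
    by (intro continuous_intros gc continuous_on_subset[OF Fc sub3])
  have c2: "continuous_on {yr u1..yr u2} (\<lambda>h. G h - g h)"
    by (intro continuous_intros gc continuous_on_subset[OF Gc sub3])
  have nz1: "\<forall>h. yr u1 \<le> h \<and> h \<le> yr u2 \<longrightarrow> (\<lambda>h. g h - F h) h \<noteq> 0" using A B C by force
  have nz2: "\<forall>h. yr u1 \<le> h \<and> h \<le> yr u2 \<longrightarrow> (\<lambda>h. G h - g h) h \<noteq> 0" using A B C by force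
  have "(\<lambda>h. g h - F h) (yr w) > 0"
    by (rule const_sign[OF c1 nz1 hv(1,2) hv(3,4)]) (use ins gv in \<open>simp add: F_def\<close>)
  moreover have "(\<lambda>h. G h - g h) (yr w) > 0"
    by (rule const_sign[OF c2 nz2 hv(1,2) hv(3,4)]) (use ins gv in \<open>simp add: G_def\<close>)
  ultimately show ?thesis using gv hv B C unfolding F_def G_def by auto
qed

lemma trap:
  assumes l: "(s,p) \<in> E" "(p,t) \<in> E" "(s,q) \<in> E" "(q,t) \<in> E"
    and e: "(v,w) \<in> E \<or> (w,v) \<in> E" and nl: "v \<notin> {s,p,q,t}" "w \<notin> {s,p,q,t}"
    and V: "v \<in> V" "w \<in> V" "s \<in> V" "t \<in> V"
    and ins: "inside s p q t (xp v) (yr v)"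
  shows "inside s p q t (xp w) (yr w)"
proof -
  from e obtain u1 u2 where u: "(u1,u2) \<in> E" "(v = u1 \<and> w = u2) \<or> (v = u2 \<and> w = u1)" by blast
  have nl': "u1 \<notin> {s,p,q,t}" "u2 \<notin> {s,p,q,t}" "u1 \<notin> {s,q,p,t}" "u2 \<notin> {s,q,p,t}" using u(2) nl by auto
  have V': "u1 \<in> V" "u2 \<in> V" using u(2) V by auto
  have vw: "v = u1 \<or> v = u2" "w = u1 \<or> w = u2" using u(2) by auto
  from ins consider
      "yr s < yr v" "yr v < yr t" "XP s p t (yr v) < xp v" "xp v < XP s q t (yr v)"
    | "yr s < yr v" "yr v < yr t" "XP s q t (yr v) < xp v" "xp v < XP s p t (yr v)"
    unfolding inside_def by blast
  thus ?thesis
  proof cases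
    case 1
    from trap0[OF l u(1) nl'(1,2) V' V(3,4) vw 1] show ?thesis unfolding inside_def by blast
  next
    case 2
    from trap0[OF l(3,4,1,2) u(1) nl'(3,4) V' V(3,4) vw 2] show ?thesis unfolding inside_def by blast
  qed
qed

lemma sign_open:
  assumes l: "(s,p) \<in> E" "(p,t) \<in> E" "(s,q) \<in> E" "(q,t) \<in> E" and pq: "p \<noteq> q"
    and x1: "yr s < x1" "x1 < yr t" and x2: "yr s < x2" "x2 < yr t"
    and lt: "XP s p t x1 < XP s q t x1"
  shows "XP s p t x2 < XP s q t x2"
proof -
  define a where "a = min x1 x2"
  define b where "b = max x1 x2"
  have sub: "{a..b} \<subseteq> {yr s..yr t}" using x1 x2 unfolding a_def b_def by auto
  have c: "continuous_on {a..b} (\<lambda>h. XP s q t h - XP s p t h)"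
    by (intro continuous_intros continuous_on_subset[OF XP_cont[OF l(3,4)] sub] continuous_on_subset[OF XP_cont[OF l(1,2)] sub])
  have nz: "\<forall>h. a \<le> h \<and> h \<le> b \<longrightarrow> (\<lambda>h. XP s q t h - XP s p t h) h \<noteq> 0"
  proof (intro allI impI)
    fix h assume "a \<le> h \<and> h \<le> b"
    hence "yr s < h" "h < yr t" using x1 x2 unfolding a_def b_def by auto
    from lens_sep[OF l pq this] show "(\<lambda>h. XP s q t h - XP s p t h) h \<noteq> 0" by simp
  qed
  have "(\<lambda>h. XP s q t h - XP s p t h) x2 > 0"
    by (rule const_sign[OF c nz]) (use lt in \<open>auto simp: a_def b_def\<close>)
  thus ?thesis by simp
qed

lemma mid_inside:
  assumes l: "(s,pa) \<in> E" "(pa,t) \<in> E" "(s,pm) \<in> E" "(pm,t) \<in> E" "(s,pb) \<in> E" "(pb,t) \<in> E"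
    and d: "pa \<noteq> pm" "pm \<noteq> pb" "pa \<noteq> pb"
    and x: "yr s < x" "x < yr t" and o: "XP s pa t x < XP s pm t x" "XP s pm t x < XP s pb t x"
  shows "inside s pa pb t (xp pm) (yr pm)"
proof -
  have hm: "yr s < yr pm" "yr pm < yr t" using edge_up[OF l(3)] edge_up[OF l(4)] by auto
  have "XP s pa t (yr pm) < XP s pm t (yr pm)" by (rule sign_open[OF l(1-4) d(1) x hm o(1)])
  moreover have "XP s pm t (yr pm) < XP s pb t (yr pm)" by (rule sign_open[OF l(3-6) d(2) x hm o(2)])
  ultimately show ?thesis using hm XP_mid[OF l(3,4)] unfolding inside_def by auto
qed

lemma theta:
  assumes l: "(s,p1) \<in> E" "(p1,t) \<in> E" "(s,p2) \<in> E" "(p2,t) \<in> E" "(s,p3) \<in> E" "(p3,t) \<in> E"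
    and d: "p1 \<noteq> p2" "p2 \<noteq> p3" "p1 \<noteq> p3"
  shows "inside s p2 p3 t (xp p1) (yr p1) \<or> inside s p1 p3 t (xp p2) (yr p2) \<or> inside s p1 p2 t (xp p3) (yr p3)"
proof -
  define x where "x = yr p1"
  have x: "yr s < x" "x < yr t" using edge_up[OF l(1)] edge_up[OF l(2)] unfolding x_def by auto
  have n12: "XP s p1 t x \<noteq> XP s p2 t x" by (rule lens_sep[OF l(1-4) d(1) x])
  have n23: "XP s p2 t x \<noteq> XP s p3 t x" by (rule lens_sep[OF l(3-6) d(2) x])
  have n13: "XP s p1 t x \<noteq> XP s p3 t x" by (rule lens_sep[OF l(1,2,5,6) d(3) x])
  consider "XP s p1 t x < XP s p2 t x" "XP s p2 t x < XP s p3 t x"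
    | "XP s p3 t x < XP s p2 t x" "XP s p2 t x < XP s p1 t x"
    | "XP s p2 t x < XP s p1 t x" "XP s p1 t x < XP s p3 t x"
    | "XP s p3 t x < XP s p1 t x" "XP s p1 t x < XP s p2 t x"
    | "XP s p1 t x < XP s p3 t x" "XP s p3 t x < XP s p2 t x"
    | "XP s p2 t x < XP s p3 t x" "XP s p3 t x < XP s p1 t x"
    using n12 n23 n13 by linarith
  thus ?thesis
  proof cases
    case 1 thus ?thesis using mid_inside[OF l(1-6) d(1,2,3) x] by blast
  next
    case 2 thus ?thesis using mid_inside[OF l(5,6,3,4,1,2) d(2)[symmetric] d(1)[symmetric] d(3)[symmetric] x] inside_sym by blast
  next
    case 3 thus ?thesis using mid_inside[OF l(3,4,1,2,5,6) d(1)[symmetric] d(3) d(2) x] by blast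
  next
    case 4 thus ?thesis using mid_inside[OF l(5,6,1,2,3,4) d(3)[symmetric] d(1) d(2)[symmetric] x] inside_sym by blast
  next
    case 5 thus ?thesis using mid_inside[OF l(1,2,5,6,3,4) d(3) d(2)[symmetric] d(1) x] by blast
  next
    case 6 thus ?thesis using mid_inside[OF l(3,4,5,6,1,2) d(2) d(3)[symmetric] d(1)[symmetric] x] inside_sym by blast
  qed
qed

end



datatype rk = SL | LC | SR | RC | SqL | qLC | SqR | RqC | SC | LR | LqR | LqL | qCC | qRR
datatype lp = pS | pL | pR | pC | qL | qR | qC
datatype ftype = TriN | TriJ | Tri0 | LevN | LevL

fun fset :: "ftype \<Rightarrow> rk set" where
  "fset LevN = {SL, LC, SR, RC, SqL, qLC, SqR, RqC}"
| "fset LevL = {SL, LC, SR, RC, SC}"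
| "fset TriN = {LR, RC, LC, LqR, RqC, qLC}"
| "fset TriJ = {LR, RC, LC, LqL, qCC, qRR}"
| "fset Tri0 = {LR, RC, LC}"

fun fpts :: "ftype \<Rightarrow> lp set" where
  "fpts LevN = {pS, pL, pR, pC, qL, qR, qC}"
| "fpts LevL = {pS, pL, pR, pC}"
| "fpts TriN = {pL, pR, pC, qL, qR, qC}"
| "fpts TriJ = {pL, pR, pC, qL, qR, qC}"
| "fpts Tri0 = {pL, pR, pC}"

fun src :: "rk \<Rightarrow> lp" where
  "src SL = pS" | "src LC = pL" | "src SR = pS" | "src RC = pR" | "src SqL = pS" | "src qLC = qL"
| "src SqR = pS" | "src RqC = pR" | "src SC = pS" | "src LR = pL" | "src LqR = pL" | "src LqL = pL"
| "src qCC = qC" | "src qRR = qR"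
fun dst :: "rk \<Rightarrow> lp" where
  "dst SL = pL" | "dst LC = pC" | "dst SR = pR" | "dst RC = pC" | "dst SqL = qL" | "dst qLC = pC"
| "dst SqR = qR" | "dst RqC = qC" | "dst SC = pC" | "dst LR = pR" | "dst LqR = qR" | "dst LqL = qL"
| "dst qCC = pC" | "dst qRR = pR"


definition has_inner :: "ftype \<Rightarrow> bool" where "has_inner F \<longleftrightarrow> F \<in> {TriN, TriJ, LevN}"


locale box =
  fixes xL xR yB yT hh :: real
  assumes w: "xR - xL \<ge> 16" and hb: "hh \<ge> 2*(xR-xL) + 20" and hgt: "yT - yB \<ge> 3*hh"
begin

fun lx :: "lp \<Rightarrow> real" where
  "lx pS = xL+4" | "lx pL = xL" | "lx pR = xR" | "lx pC = xR"
| "lx qL = xL+4" | "lx qR = xR-4" | "lx qC = xR-4"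
fun ly :: "lp \<Rightarrow> real" where
  "ly pS = yB" | "ly pL = yB+4" | "ly pR = yT-hh-4" | "ly pC = yT"
| "ly qL = yB+hh+4" | "ly qR = yT-2*hh-4" | "ly qC = yT-hh"

fun rX :: "rk \<Rightarrow> real \<Rightarrow> real" where
  "rX SL h = xL + 4 - (h - yB)"
| "rX LC h = max (min (xL+2) (xL + h/2 - yB/2 - 2)) (xR - 2*(yT-h))"
| "rX SR h = max (min (xR-2) (xL+4+(h-yB))) (xR - (yT-hh-4-h))"
| "rX RC h = xR"
| "rX SqL h = xL+4"
| "rX qLC h = max (xL+4) (xR - (yT-h))"
| "rX SqR h = min (min (xR-3) (xL+4+h/2-yB/2)) (xR-4+(yT-2*hh-4-h))"
| "rX RqC h = xR - (h - (yT-hh-4))"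
| "rX SC h = max (xL+4) (xR - (yT-h))"
| "rX LR h = min xR (xL + 2*(h-yB-4))"
| "rX LqR h = min (min (xR-3) (xL + (h-yB-4))) (xR-4+(yT-2*hh-4-h))"
| "rX LqL h = min (xL+4) (xL+(h-yB-4))"
| "rX qCC h = max (xR-4) (xR-(yT-h))"
| "rX qRR h = max (min (xR-2) (xR-4+(h-(yT-2*hh-4)))) (xR-(yT-hh-4-h))"

definition inr :: "rk \<Rightarrow> real \<Rightarrow> bool" where
  "inr k h \<longleftrightarrow> ly (src k) \<le> h \<and> h \<le> ly (dst k)"

lemma rX_src: "rX k (ly (src k)) = lx (src k)" using w hb hgt
  by (cases k) (auto simp: min_def max_def add_divide_distrib diff_divide_distrib split: if_splits; linarith)+
lemma rX_dst: "rX k (ly (dst k)) = lx (dst k)" using w hb hgt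
  by (cases k) (auto simp: min_def max_def add_divide_distrib diff_divide_distrib split: if_splits; linarith)+
lemma src_dst: "ly (src k) < ly (dst k)" using w hb hgt by (cases k) auto

definition ok2 :: "rk \<Rightarrow> rk \<Rightarrow> bool" where
  "ok2 k1 k2 \<longleftrightarrow> (\<forall>h. inr k1 h \<longrightarrow> inr k2 h \<longrightarrow> rX k1 h = rX k2 h \<longrightarrow>
      h = ly (src k1) \<or> h = ly (dst k1))"

lemma ok2_LC_LR: "ok2 LC LR" unfolding ok2_def inr_def using w hb hgt
  by (auto simp: min_def max_def add_divide_distrib diff_divide_distrib split: if_splits; linarith)

lemma ok2_LC_LqL: "ok2 LC LqL" unfolding ok2_def inr_def using w hb hgt
  by (auto simp: min_def max_def add_divide_distrib diff_divide_distrib split: if_splits; linarith)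

lemma ok2_LC_LqR: "ok2 LC LqR" unfolding ok2_def inr_def using w hb hgt
  by (auto simp: min_def max_def add_divide_distrib diff_divide_distrib split: if_splits; linarith)

lemma ok2_LC_RC: "ok2 LC RC" unfolding ok2_def inr_def using w hb hgt
  by (auto simp: min_def max_def add_divide_distrib diff_divide_distrib split: if_splits; linarith)

lemma ok2_LC_RqC: "ok2 LC RqC" unfolding ok2_def inr_def using w hb hgt
  by (auto simp: min_def max_def add_divide_distrib diff_divide_distrib split: if_splits; linarith)

lemma ok2_LC_SC: "ok2 LC SC" unfolding ok2_def inr_def using w hb hgt
  by (auto simp: min_def max_def add_divide_distrib diff_divide_distrib split: if_splits; linarith)

lemma ok2_LC_SL: "ok2 LC SL" unfolding ok2_def inr_def using w hb hgt
  by (auto simp: min_def max_def add_divide_distrib diff_divide_distrib split: if_splits; linarith)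

lemma ok2_LC_SR: "ok2 LC SR" unfolding ok2_def inr_def using w hb hgt
  by (auto simp: min_def max_def add_divide_distrib diff_divide_distrib split: if_splits; linarith)

lemma ok2_LC_SqL: "ok2 LC SqL" unfolding ok2_def inr_def using w hb hgt
  by (auto simp: min_def max_def add_divide_distrib diff_divide_distrib split: if_splits; linarith)

lemma ok2_LC_SqR: "ok2 LC SqR" unfolding ok2_def inr_def using w hb hgt
  by (auto simp: min_def max_def add_divide_distrib diff_divide_distrib split: if_splits; linarith)

lemma ok2_LC_qCC: "ok2 LC qCC" unfolding ok2_def inr_def using w hb hgt
  by (auto simp: min_def max_def add_divide_distrib diff_divide_distrib split: if_splits; linarith)

lemma ok2_LC_qLC: "ok2 LC qLC" unfolding ok2_def inr_def using w hb hgt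
  by (auto simp: min_def max_def add_divide_distrib diff_divide_distrib split: if_splits; linarith)

lemma ok2_LC_qRR: "ok2 LC qRR" unfolding ok2_def inr_def using w hb hgt
  by (auto simp: min_def max_def add_divide_distrib diff_divide_distrib split: if_splits; linarith)

lemma ok2_LR_LqL: "ok2 LR LqL" unfolding ok2_def inr_def using w hb hgt
  by (auto simp: min_def max_def add_divide_distrib diff_divide_distrib split: if_splits; linarith)

lemma ok2_LR_LqR: "ok2 LR LqR" unfolding ok2_def inr_def using w hb hgt
  by (auto simp: min_def max_def add_divide_distrib diff_divide_distrib split: if_splits; linarith)

lemma ok2_LR_RC: "ok2 LR RC" unfolding ok2_def inr_def using w hb hgt
  by (auto simp: min_def max_def add_divide_distrib diff_divide_distrib split: if_splits; linarith)

lemma ok2_LR_RqC: "ok2 LR RqC" unfolding ok2_def inr_def using w hb hgt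
  by (auto simp: min_def max_def add_divide_distrib diff_divide_distrib split: if_splits; linarith)

lemma ok2_LR_qCC: "ok2 LR qCC" unfolding ok2_def inr_def using w hb hgt
  by (auto simp: min_def max_def add_divide_distrib diff_divide_distrib split: if_splits; linarith)

lemma ok2_LR_qLC: "ok2 LR qLC" unfolding ok2_def inr_def using w hb hgt
  by (auto simp: min_def max_def add_divide_distrib diff_divide_distrib split: if_splits; linarith)

lemma ok2_LR_qRR: "ok2 LR qRR" unfolding ok2_def inr_def using w hb hgt
  by (auto simp: min_def max_def add_divide_distrib diff_divide_distrib split: if_splits; linarith)

lemma ok2_LqL_RC: "ok2 LqL RC" unfolding ok2_def inr_def using w hb hgt
  by (auto simp: min_def max_def add_divide_distrib diff_divide_distrib split: if_splits; linarith)

lemma ok2_LqL_qCC: "ok2 LqL qCC" unfolding ok2_def inr_def using w hb hgt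
  by (auto simp: min_def max_def add_divide_distrib diff_divide_distrib split: if_splits; linarith)

lemma ok2_LqL_qRR: "ok2 LqL qRR" unfolding ok2_def inr_def using w hb hgt
  by (auto simp: min_def max_def add_divide_distrib diff_divide_distrib split: if_splits; linarith)

lemma ok2_LqR_RC: "ok2 LqR RC" unfolding ok2_def inr_def using w hb hgt
  by (auto simp: min_def max_def add_divide_distrib diff_divide_distrib split: if_splits; linarith)

lemma ok2_LqR_RqC: "ok2 LqR RqC" unfolding ok2_def inr_def using w hb hgt
  by (auto simp: min_def max_def add_divide_distrib diff_divide_distrib split: if_splits; linarith)

lemma ok2_LqR_qLC: "ok2 LqR qLC" unfolding ok2_def inr_def using w hb hgt
  by (auto simp: min_def max_def add_divide_distrib diff_divide_distrib split: if_splits; linarith)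

lemma ok2_RC_RqC: "ok2 RC RqC" unfolding ok2_def inr_def using w hb hgt
  by (auto simp: min_def max_def add_divide_distrib diff_divide_distrib split: if_splits; linarith)

lemma ok2_RC_SC: "ok2 RC SC" unfolding ok2_def inr_def using w hb hgt
  by (auto simp: min_def max_def add_divide_distrib diff_divide_distrib split: if_splits; linarith)

lemma ok2_RC_SL: "ok2 RC SL" unfolding ok2_def inr_def using w hb hgt
  by (auto simp: min_def max_def add_divide_distrib diff_divide_distrib split: if_splits; linarith)

lemma ok2_RC_SR: "ok2 RC SR" unfolding ok2_def inr_def using w hb hgt
  by (auto simp: min_def max_def add_divide_distrib diff_divide_distrib split: if_splits; linarith)

lemma ok2_RC_SqL: "ok2 RC SqL" unfolding ok2_def inr_def using w hb hgt
  by (auto simp: min_def max_def add_divide_distrib diff_divide_distrib split: if_splits; linarith)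

lemma ok2_RC_SqR: "ok2 RC SqR" unfolding ok2_def inr_def using w hb hgt
  by (auto simp: min_def max_def add_divide_distrib diff_divide_distrib split: if_splits; linarith)

lemma ok2_RC_qCC: "ok2 RC qCC" unfolding ok2_def inr_def using w hb hgt
  by (auto simp: min_def max_def add_divide_distrib diff_divide_distrib split: if_splits; linarith)

lemma ok2_RC_qLC: "ok2 RC qLC" unfolding ok2_def inr_def using w hb hgt
  by (auto simp: min_def max_def add_divide_distrib diff_divide_distrib split: if_splits; linarith)

lemma ok2_RC_qRR: "ok2 RC qRR" unfolding ok2_def inr_def using w hb hgt
  by (auto simp: min_def max_def add_divide_distrib diff_divide_distrib split: if_splits; linarith)

lemma ok2_RqC_SL: "ok2 RqC SL" unfolding ok2_def inr_def using w hb hgt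
  by (auto simp: min_def max_def add_divide_distrib diff_divide_distrib split: if_splits; linarith)

lemma ok2_RqC_SR: "ok2 RqC SR" unfolding ok2_def inr_def using w hb hgt
  by (auto simp: min_def max_def add_divide_distrib diff_divide_distrib split: if_splits; linarith)

lemma ok2_RqC_SqL: "ok2 RqC SqL" unfolding ok2_def inr_def using w hb hgt
  by (auto simp: min_def max_def add_divide_distrib diff_divide_distrib split: if_splits; linarith)

lemma ok2_RqC_SqR: "ok2 RqC SqR" unfolding ok2_def inr_def using w hb hgt
  by (auto simp: min_def max_def add_divide_distrib diff_divide_distrib split: if_splits; linarith)

lemma ok2_RqC_qLC: "ok2 RqC qLC" unfolding ok2_def inr_def using w hb hgt
  by (auto simp: min_def max_def add_divide_distrib diff_divide_distrib split: if_splits; linarith)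

lemma ok2_SC_SL: "ok2 SC SL" unfolding ok2_def inr_def using w hb hgt
  by (auto simp: min_def max_def add_divide_distrib diff_divide_distrib split: if_splits; linarith)

lemma ok2_SC_SR: "ok2 SC SR" unfolding ok2_def inr_def using w hb hgt
  by (auto simp: min_def max_def add_divide_distrib diff_divide_distrib split: if_splits; linarith)

lemma ok2_SL_SR: "ok2 SL SR" unfolding ok2_def inr_def using w hb hgt
  by (auto simp: min_def max_def add_divide_distrib diff_divide_distrib split: if_splits; linarith)

lemma ok2_SL_SqL: "ok2 SL SqL" unfolding ok2_def inr_def using w hb hgt
  by (auto simp: min_def max_def add_divide_distrib diff_divide_distrib split: if_splits; linarith)

lemma ok2_SL_SqR: "ok2 SL SqR" unfolding ok2_def inr_def using w hb hgt
  by (auto simp: min_def max_def add_divide_distrib diff_divide_distrib split: if_splits; linarith)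

lemma ok2_SL_qLC: "ok2 SL qLC" unfolding ok2_def inr_def using w hb hgt
  by (auto simp: min_def max_def add_divide_distrib diff_divide_distrib split: if_splits; linarith)

lemma ok2_SR_SqL: "ok2 SR SqL" unfolding ok2_def inr_def using w hb hgt
  by (auto simp: min_def max_def add_divide_distrib diff_divide_distrib split: if_splits; linarith)

lemma ok2_SR_SqR: "ok2 SR SqR" unfolding ok2_def inr_def using w hb hgt
  by (auto simp: min_def max_def add_divide_distrib diff_divide_distrib split: if_splits; linarith)

lemma ok2_SR_qLC: "ok2 SR qLC" unfolding ok2_def inr_def using w hb hgt
  by (auto simp: min_def max_def add_divide_distrib diff_divide_distrib split: if_splits; linarith)

lemma ok2_SqL_SqR: "ok2 SqL SqR" unfolding ok2_def inr_def using w hb hgt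
  by (auto simp: min_def max_def add_divide_distrib diff_divide_distrib split: if_splits; linarith)

lemma ok2_SqL_qLC: "ok2 SqL qLC" unfolding ok2_def inr_def using w hb hgt
  by (auto simp: min_def max_def add_divide_distrib diff_divide_distrib split: if_splits; linarith)

lemma ok2_SqR_qLC: "ok2 SqR qLC" unfolding ok2_def inr_def using w hb hgt
  by (auto simp: min_def max_def add_divide_distrib diff_divide_distrib split: if_splits; linarith)

lemma ok2_qCC_qRR: "ok2 qCC qRR" unfolding ok2_def inr_def using w hb hgt
  by (auto simp: min_def max_def add_divide_distrib diff_divide_distrib split: if_splits; linarith)

definition okv :: "rk \<Rightarrow> lp \<Rightarrow> bool" where
  "okv k p \<longleftrightarrow> \<not> (inr k (ly p) \<and> rX k (ly p) = lx p)"

lemma okv_LC_pR: "okv LC pR" unfolding okv_def inr_def using w hb hgt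
  by (auto simp: min_def max_def add_divide_distrib diff_divide_distrib split: if_splits; linarith)

lemma okv_LC_pS: "okv LC pS" unfolding okv_def inr_def using w hb hgt
  by (auto simp: min_def max_def add_divide_distrib diff_divide_distrib split: if_splits; linarith)

lemma okv_LC_qC: "okv LC qC" unfolding okv_def inr_def using w hb hgt
  by (auto simp: min_def max_def add_divide_distrib diff_divide_distrib split: if_splits; linarith)

lemma okv_LC_qL: "okv LC qL" unfolding okv_def inr_def using w hb hgt
  by (auto simp: min_def max_def add_divide_distrib diff_divide_distrib split: if_splits; linarith)

lemma okv_LC_qR: "okv LC qR" unfolding okv_def inr_def using w hb hgt
  by (auto simp: min_def max_def add_divide_distrib diff_divide_distrib split: if_splits; linarith)

lemma okv_LR_pC: "okv LR pC" unfolding okv_def inr_def using w hb hgt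
  by (auto simp: min_def max_def add_divide_distrib diff_divide_distrib split: if_splits; linarith)

lemma okv_LR_qC: "okv LR qC" unfolding okv_def inr_def using w hb hgt
  by (auto simp: min_def max_def add_divide_distrib diff_divide_distrib split: if_splits; linarith)

lemma okv_LR_qL: "okv LR qL" unfolding okv_def inr_def using w hb hgt
  by (auto simp: min_def max_def add_divide_distrib diff_divide_distrib split: if_splits; linarith)

lemma okv_LR_qR: "okv LR qR" unfolding okv_def inr_def using w hb hgt
  by (auto simp: min_def max_def add_divide_distrib diff_divide_distrib split: if_splits; linarith)

lemma okv_LqL_pC: "okv LqL pC" unfolding okv_def inr_def using w hb hgt
  by (auto simp: min_def max_def add_divide_distrib diff_divide_distrib split: if_splits; linarith)

lemma okv_LqL_pR: "okv LqL pR" unfolding okv_def inr_def using w hb hgt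
  by (auto simp: min_def max_def add_divide_distrib diff_divide_distrib split: if_splits; linarith)

lemma okv_LqL_qC: "okv LqL qC" unfolding okv_def inr_def using w hb hgt
  by (auto simp: min_def max_def add_divide_distrib diff_divide_distrib split: if_splits; linarith)

lemma okv_LqL_qR: "okv LqL qR" unfolding okv_def inr_def using w hb hgt
  by (auto simp: min_def max_def add_divide_distrib diff_divide_distrib split: if_splits; linarith)

lemma okv_LqR_pC: "okv LqR pC" unfolding okv_def inr_def using w hb hgt
  by (auto simp: min_def max_def add_divide_distrib diff_divide_distrib split: if_splits; linarith)

lemma okv_LqR_pR: "okv LqR pR" unfolding okv_def inr_def using w hb hgt
  by (auto simp: min_def max_def add_divide_distrib diff_divide_distrib split: if_splits; linarith)

lemma okv_LqR_qC: "okv LqR qC" unfolding okv_def inr_def using w hb hgt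
  by (auto simp: min_def max_def add_divide_distrib diff_divide_distrib split: if_splits; linarith)

lemma okv_LqR_qL: "okv LqR qL" unfolding okv_def inr_def using w hb hgt
  by (auto simp: min_def max_def add_divide_distrib diff_divide_distrib split: if_splits; linarith)

lemma okv_RC_pL: "okv RC pL" unfolding okv_def inr_def using w hb hgt
  by (auto simp: min_def max_def add_divide_distrib diff_divide_distrib split: if_splits; linarith)

lemma okv_RC_pS: "okv RC pS" unfolding okv_def inr_def using w hb hgt
  by (auto simp: min_def max_def add_divide_distrib diff_divide_distrib split: if_splits; linarith)

lemma okv_RC_qC: "okv RC qC" unfolding okv_def inr_def using w hb hgt
  by (auto simp: min_def max_def add_divide_distrib diff_divide_distrib split: if_splits; linarith)

lemma okv_RC_qL: "okv RC qL" unfolding okv_def inr_def using w hb hgt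
  by (auto simp: min_def max_def add_divide_distrib diff_divide_distrib split: if_splits; linarith)

lemma okv_RC_qR: "okv RC qR" unfolding okv_def inr_def using w hb hgt
  by (auto simp: min_def max_def add_divide_distrib diff_divide_distrib split: if_splits; linarith)

lemma okv_RqC_pC: "okv RqC pC" unfolding okv_def inr_def using w hb hgt
  by (auto simp: min_def max_def add_divide_distrib diff_divide_distrib split: if_splits; linarith)

lemma okv_RqC_pL: "okv RqC pL" unfolding okv_def inr_def using w hb hgt
  by (auto simp: min_def max_def add_divide_distrib diff_divide_distrib split: if_splits; linarith)

lemma okv_RqC_pS: "okv RqC pS" unfolding okv_def inr_def using w hb hgt
  by (auto simp: min_def max_def add_divide_distrib diff_divide_distrib split: if_splits; linarith)

lemma okv_RqC_qL: "okv RqC qL" unfolding okv_def inr_def using w hb hgt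
  by (auto simp: min_def max_def add_divide_distrib diff_divide_distrib split: if_splits; linarith)

lemma okv_RqC_qR: "okv RqC qR" unfolding okv_def inr_def using w hb hgt
  by (auto simp: min_def max_def add_divide_distrib diff_divide_distrib split: if_splits; linarith)

lemma okv_SC_pL: "okv SC pL" unfolding okv_def inr_def using w hb hgt
  by (auto simp: min_def max_def add_divide_distrib diff_divide_distrib split: if_splits; linarith)

lemma okv_SC_pR: "okv SC pR" unfolding okv_def inr_def using w hb hgt
  by (auto simp: min_def max_def add_divide_distrib diff_divide_distrib split: if_splits; linarith)

lemma okv_SL_pC: "okv SL pC" unfolding okv_def inr_def using w hb hgt
  by (auto simp: min_def max_def add_divide_distrib diff_divide_distrib split: if_splits; linarith)

lemma okv_SL_pR: "okv SL pR" unfolding okv_def inr_def using w hb hgt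
  by (auto simp: min_def max_def add_divide_distrib diff_divide_distrib split: if_splits; linarith)

lemma okv_SL_qC: "okv SL qC" unfolding okv_def inr_def using w hb hgt
  by (auto simp: min_def max_def add_divide_distrib diff_divide_distrib split: if_splits; linarith)

lemma okv_SL_qL: "okv SL qL" unfolding okv_def inr_def using w hb hgt
  by (auto simp: min_def max_def add_divide_distrib diff_divide_distrib split: if_splits; linarith)

lemma okv_SL_qR: "okv SL qR" unfolding okv_def inr_def using w hb hgt
  by (auto simp: min_def max_def add_divide_distrib diff_divide_distrib split: if_splits; linarith)

lemma okv_SR_pC: "okv SR pC" unfolding okv_def inr_def using w hb hgt
  by (auto simp: min_def max_def add_divide_distrib diff_divide_distrib split: if_splits; linarith)

lemma okv_SR_pL: "okv SR pL" unfolding okv_def inr_def using w hb hgt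
  by (auto simp: min_def max_def add_divide_distrib diff_divide_distrib split: if_splits; linarith)

lemma okv_SR_qC: "okv SR qC" unfolding okv_def inr_def using w hb hgt
  by (auto simp: min_def max_def add_divide_distrib diff_divide_distrib split: if_splits; linarith)

lemma okv_SR_qL: "okv SR qL" unfolding okv_def inr_def using w hb hgt
  by (auto simp: min_def max_def add_divide_distrib diff_divide_distrib split: if_splits; linarith)

lemma okv_SR_qR: "okv SR qR" unfolding okv_def inr_def using w hb hgt
  by (auto simp: min_def max_def add_divide_distrib diff_divide_distrib split: if_splits; linarith)

lemma okv_SqL_pC: "okv SqL pC" unfolding okv_def inr_def using w hb hgt
  by (auto simp: min_def max_def add_divide_distrib diff_divide_distrib split: if_splits; linarith)

lemma okv_SqL_pL: "okv SqL pL" unfolding okv_def inr_def using w hb hgt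
  by (auto simp: min_def max_def add_divide_distrib diff_divide_distrib split: if_splits; linarith)

lemma okv_SqL_pR: "okv SqL pR" unfolding okv_def inr_def using w hb hgt
  by (auto simp: min_def max_def add_divide_distrib diff_divide_distrib split: if_splits; linarith)

lemma okv_SqL_qC: "okv SqL qC" unfolding okv_def inr_def using w hb hgt
  by (auto simp: min_def max_def add_divide_distrib diff_divide_distrib split: if_splits; linarith)

lemma okv_SqL_qR: "okv SqL qR" unfolding okv_def inr_def using w hb hgt
  by (auto simp: min_def max_def add_divide_distrib diff_divide_distrib split: if_splits; linarith)

lemma okv_SqR_pC: "okv SqR pC" unfolding okv_def inr_def using w hb hgt
  by (auto simp: min_def max_def add_divide_distrib diff_divide_distrib split: if_splits; linarith)

lemma okv_SqR_pL: "okv SqR pL" unfolding okv_def inr_def using w hb hgt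
  by (auto simp: min_def max_def add_divide_distrib diff_divide_distrib split: if_splits; linarith)

lemma okv_SqR_pR: "okv SqR pR" unfolding okv_def inr_def using w hb hgt
  by (auto simp: min_def max_def add_divide_distrib diff_divide_distrib split: if_splits; linarith)

lemma okv_SqR_qC: "okv SqR qC" unfolding okv_def inr_def using w hb hgt
  by (auto simp: min_def max_def add_divide_distrib diff_divide_distrib split: if_splits; linarith)

lemma okv_SqR_qL: "okv SqR qL" unfolding okv_def inr_def using w hb hgt
  by (auto simp: min_def max_def add_divide_distrib diff_divide_distrib split: if_splits; linarith)

lemma okv_qCC_pL: "okv qCC pL" unfolding okv_def inr_def using w hb hgt
  by (auto simp: min_def max_def add_divide_distrib diff_divide_distrib split: if_splits; linarith)

lemma okv_qCC_pR: "okv qCC pR" unfolding okv_def inr_def using w hb hgt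
  by (auto simp: min_def max_def add_divide_distrib diff_divide_distrib split: if_splits; linarith)

lemma okv_qCC_qL: "okv qCC qL" unfolding okv_def inr_def using w hb hgt
  by (auto simp: min_def max_def add_divide_distrib diff_divide_distrib split: if_splits; linarith)

lemma okv_qCC_qR: "okv qCC qR" unfolding okv_def inr_def using w hb hgt
  by (auto simp: min_def max_def add_divide_distrib diff_divide_distrib split: if_splits; linarith)

lemma okv_qLC_pL: "okv qLC pL" unfolding okv_def inr_def using w hb hgt
  by (auto simp: min_def max_def add_divide_distrib diff_divide_distrib split: if_splits; linarith)

lemma okv_qLC_pR: "okv qLC pR" unfolding okv_def inr_def using w hb hgt
  by (auto simp: min_def max_def add_divide_distrib diff_divide_distrib split: if_splits; linarith)

lemma okv_qLC_pS: "okv qLC pS" unfolding okv_def inr_def using w hb hgt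
  by (auto simp: min_def max_def add_divide_distrib diff_divide_distrib split: if_splits; linarith)

lemma okv_qLC_qC: "okv qLC qC" unfolding okv_def inr_def using w hb hgt
  by (auto simp: min_def max_def add_divide_distrib diff_divide_distrib split: if_splits; linarith)

lemma okv_qLC_qR: "okv qLC qR" unfolding okv_def inr_def using w hb hgt
  by (auto simp: min_def max_def add_divide_distrib diff_divide_distrib split: if_splits; linarith)

lemma okv_qRR_pC: "okv qRR pC" unfolding okv_def inr_def using w hb hgt
  by (auto simp: min_def max_def add_divide_distrib diff_divide_distrib split: if_splits; linarith)

lemma okv_qRR_pL: "okv qRR pL" unfolding okv_def inr_def using w hb hgt
  by (auto simp: min_def max_def add_divide_distrib diff_divide_distrib split: if_splits; linarith)

lemma okv_qRR_qC: "okv qRR qC" unfolding okv_def inr_def using w hb hgt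
  by (auto simp: min_def max_def add_divide_distrib diff_divide_distrib split: if_splits; linarith)

lemma okv_qRR_qL: "okv qRR qL" unfolding okv_def inr_def using w hb hgt
  by (auto simp: min_def max_def add_divide_distrib diff_divide_distrib split: if_splits; linarith)

lemma LA_SL: "inr SL h \<Longrightarrow> xL \<le> rX SL h \<and> rX SL h \<le> xR \<and> yB \<le> h \<and> h \<le> yT"
  unfolding inr_def using w hb hgt by (auto simp: min_def max_def add_divide_distrib diff_divide_distrib split: if_splits; linarith)
lemma LC_SL: "inr SL h \<Longrightarrow> rX SL h \<le> xL \<Longrightarrow> h = ly pL \<and> (src SL = pL \<or> dst SL = pL)"
  unfolding inr_def using w hb hgt by (auto simp: min_def max_def add_divide_distrib diff_divide_distrib split: if_splits; linarith)

lemma LA_LC: "inr LC h \<Longrightarrow> xL \<le> rX LC h \<and> rX LC h \<le> xR \<and> yB \<le> h \<and> h \<le> yT"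
  unfolding inr_def using w hb hgt by (auto simp: min_def max_def add_divide_distrib diff_divide_distrib split: if_splits; linarith)
lemma LC_LC: "inr LC h \<Longrightarrow> rX LC h \<le> xL \<Longrightarrow> h = ly pL \<and> (src LC = pL \<or> dst LC = pL)"
  unfolding inr_def using w hb hgt by (auto simp: min_def max_def add_divide_distrib diff_divide_distrib split: if_splits; linarith)

lemma LA_SR: "inr SR h \<Longrightarrow> xL \<le> rX SR h \<and> rX SR h \<le> xR \<and> yB \<le> h \<and> h \<le> yT"
  unfolding inr_def using w hb hgt by (auto simp: min_def max_def add_divide_distrib diff_divide_distrib split: if_splits; linarith)
lemma LC_SR: "inr SR h \<Longrightarrow> rX SR h \<le> xL \<Longrightarrow> h = ly pL \<and> (src SR = pL \<or> dst SR = pL)"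
  unfolding inr_def using w hb hgt by (auto simp: min_def max_def add_divide_distrib diff_divide_distrib split: if_splits; linarith)

lemma LA_RC: "inr RC h \<Longrightarrow> xL \<le> rX RC h \<and> rX RC h \<le> xR \<and> yB \<le> h \<and> h \<le> yT"
  unfolding inr_def using w hb hgt by (auto simp: min_def max_def add_divide_distrib diff_divide_distrib split: if_splits; linarith)
lemma LC_RC: "inr RC h \<Longrightarrow> rX RC h \<le> xL \<Longrightarrow> h = ly pL \<and> (src RC = pL \<or> dst RC = pL)"
  unfolding inr_def using w hb hgt by (auto simp: min_def max_def add_divide_distrib diff_divide_distrib split: if_splits; linarith)

lemma LA_SqL: "inr SqL h \<Longrightarrow> xL \<le> rX SqL h \<and> rX SqL h \<le> xR \<and> yB \<le> h \<and> h \<le> yT"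
  unfolding inr_def using w hb hgt by (auto simp: min_def max_def add_divide_distrib diff_divide_distrib split: if_splits; linarith)
lemma LC_SqL: "inr SqL h \<Longrightarrow> rX SqL h \<le> xL \<Longrightarrow> h = ly pL \<and> (src SqL = pL \<or> dst SqL = pL)"
  unfolding inr_def using w hb hgt by (auto simp: min_def max_def add_divide_distrib diff_divide_distrib split: if_splits; linarith)

lemma LA_qLC: "inr qLC h \<Longrightarrow> xL \<le> rX qLC h \<and> rX qLC h \<le> xR \<and> yB \<le> h \<and> h \<le> yT"
  unfolding inr_def using w hb hgt by (auto simp: min_def max_def add_divide_distrib diff_divide_distrib split: if_splits; linarith)
lemma LC_qLC: "inr qLC h \<Longrightarrow> rX qLC h \<le> xL \<Longrightarrow> h = ly pL \<and> (src qLC = pL \<or> dst qLC = pL)"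
  unfolding inr_def using w hb hgt by (auto simp: min_def max_def add_divide_distrib diff_divide_distrib split: if_splits; linarith)

lemma LA_SqR: "inr SqR h \<Longrightarrow> xL \<le> rX SqR h \<and> rX SqR h \<le> xR \<and> yB \<le> h \<and> h \<le> yT"
  unfolding inr_def using w hb hgt by (auto simp: min_def max_def add_divide_distrib diff_divide_distrib split: if_splits; linarith)
lemma LC_SqR: "inr SqR h \<Longrightarrow> rX SqR h \<le> xL \<Longrightarrow> h = ly pL \<and> (src SqR = pL \<or> dst SqR = pL)"
  unfolding inr_def using w hb hgt by (auto simp: min_def max_def add_divide_distrib diff_divide_distrib split: if_splits; linarith)

lemma LA_RqC: "inr RqC h \<Longrightarrow> xL \<le> rX RqC h \<and> rX RqC h \<le> xR \<and> yB \<le> h \<and> h \<le> yT"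
  unfolding inr_def using w hb hgt by (auto simp: min_def max_def add_divide_distrib diff_divide_distrib split: if_splits; linarith)
lemma LC_RqC: "inr RqC h \<Longrightarrow> rX RqC h \<le> xL \<Longrightarrow> h = ly pL \<and> (src RqC = pL \<or> dst RqC = pL)"
  unfolding inr_def using w hb hgt by (auto simp: min_def max_def add_divide_distrib diff_divide_distrib split: if_splits; linarith)

lemma LA_SC: "inr SC h \<Longrightarrow> xL \<le> rX SC h \<and> rX SC h \<le> xR \<and> yB \<le> h \<and> h \<le> yT"
  unfolding inr_def using w hb hgt by (auto simp: min_def max_def add_divide_distrib diff_divide_distrib split: if_splits; linarith)
lemma LC_SC: "inr SC h \<Longrightarrow> rX SC h \<le> xL \<Longrightarrow> h = ly pL \<and> (src SC = pL \<or> dst SC = pL)"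
  unfolding inr_def using w hb hgt by (auto simp: min_def max_def add_divide_distrib diff_divide_distrib split: if_splits; linarith)

lemma LA_LR: "inr LR h \<Longrightarrow> xL \<le> rX LR h \<and> rX LR h \<le> xR \<and> yB \<le> h \<and> h \<le> yT"
  unfolding inr_def using w hb hgt by (auto simp: min_def max_def add_divide_distrib diff_divide_distrib split: if_splits; linarith)
lemma LC_LR: "inr LR h \<Longrightarrow> rX LR h \<le> xL \<Longrightarrow> h = ly pL \<and> (src LR = pL \<or> dst LR = pL)"
  unfolding inr_def using w hb hgt by (auto simp: min_def max_def add_divide_distrib diff_divide_distrib split: if_splits; linarith)

lemma LA_LqR: "inr LqR h \<Longrightarrow> xL \<le> rX LqR h \<and> rX LqR h \<le> xR \<and> yB \<le> h \<and> h \<le> yT"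
  unfolding inr_def using w hb hgt by (auto simp: min_def max_def add_divide_distrib diff_divide_distrib split: if_splits; linarith)
lemma LC_LqR: "inr LqR h \<Longrightarrow> rX LqR h \<le> xL \<Longrightarrow> h = ly pL \<and> (src LqR = pL \<or> dst LqR = pL)"
  unfolding inr_def using w hb hgt by (auto simp: min_def max_def add_divide_distrib diff_divide_distrib split: if_splits; linarith)

lemma LA_LqL: "inr LqL h \<Longrightarrow> xL \<le> rX LqL h \<and> rX LqL h \<le> xR \<and> yB \<le> h \<and> h \<le> yT"
  unfolding inr_def using w hb hgt by (auto simp: min_def max_def add_divide_distrib diff_divide_distrib split: if_splits; linarith)
lemma LC_LqL: "inr LqL h \<Longrightarrow> rX LqL h \<le> xL \<Longrightarrow> h = ly pL \<and> (src LqL = pL \<or> dst LqL = pL)"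
  unfolding inr_def using w hb hgt by (auto simp: min_def max_def add_divide_distrib diff_divide_distrib split: if_splits; linarith)

lemma LA_qCC: "inr qCC h \<Longrightarrow> xL \<le> rX qCC h \<and> rX qCC h \<le> xR \<and> yB \<le> h \<and> h \<le> yT"
  unfolding inr_def using w hb hgt by (auto simp: min_def max_def add_divide_distrib diff_divide_distrib split: if_splits; linarith)
lemma LC_qCC: "inr qCC h \<Longrightarrow> rX qCC h \<le> xL \<Longrightarrow> h = ly pL \<and> (src qCC = pL \<or> dst qCC = pL)"
  unfolding inr_def using w hb hgt by (auto simp: min_def max_def add_divide_distrib diff_divide_distrib split: if_splits; linarith)

lemma LA_qRR: "inr qRR h \<Longrightarrow> xL \<le> rX qRR h \<and> rX qRR h \<le> xR \<and> yB \<le> h \<and> h \<le> yT"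
  unfolding inr_def using w hb hgt by (auto simp: min_def max_def add_divide_distrib diff_divide_distrib split: if_splits; linarith)
lemma LC_qRR: "inr qRR h \<Longrightarrow> rX qRR h \<le> xL \<Longrightarrow> h = ly pL \<and> (src qRR = pL \<or> dst qRR = pL)"
  unfolding inr_def using w hb hgt by (auto simp: min_def max_def add_divide_distrib diff_divide_distrib split: if_splits; linarith)

lemma LB_SL: "inr SL h \<Longrightarrow> xL + 4 \<le> rX SL h \<Longrightarrow> rX SL h \<le> xR - 4 \<Longrightarrow> yB + hh \<le> h \<Longrightarrow> h \<le> yT - hh \<Longrightarrow>
   rX SL h = xL + 4 \<or> (rX SL h = lx qR \<and> h = ly qR) \<or> (rX SL h = lx qC \<and> h = ly qC)"
  unfolding inr_def using w hb hgt by (auto simp: min_def max_def add_divide_distrib diff_divide_distrib split: if_splits; linarith)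

lemma LB_LC: "inr LC h \<Longrightarrow> xL + 4 \<le> rX LC h \<Longrightarrow> rX LC h \<le> xR - 4 \<Longrightarrow> yB + hh \<le> h \<Longrightarrow> h \<le> yT - hh \<Longrightarrow>
   rX LC h = xL + 4 \<or> (rX LC h = lx qR \<and> h = ly qR) \<or> (rX LC h = lx qC \<and> h = ly qC)"
  unfolding inr_def using w hb hgt by (auto simp: min_def max_def add_divide_distrib diff_divide_distrib split: if_splits; linarith)

lemma LB_SR: "inr SR h \<Longrightarrow> xL + 4 \<le> rX SR h \<Longrightarrow> rX SR h \<le> xR - 4 \<Longrightarrow> yB + hh \<le> h \<Longrightarrow> h \<le> yT - hh \<Longrightarrow>
   rX SR h = xL + 4 \<or> (rX SR h = lx qR \<and> h = ly qR) \<or> (rX SR h = lx qC \<and> h = ly qC)"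
  unfolding inr_def using w hb hgt by (auto simp: min_def max_def add_divide_distrib diff_divide_distrib split: if_splits; linarith)

lemma LB_RC: "inr RC h \<Longrightarrow> xL + 4 \<le> rX RC h \<Longrightarrow> rX RC h \<le> xR - 4 \<Longrightarrow> yB + hh \<le> h \<Longrightarrow> h \<le> yT - hh \<Longrightarrow>
   rX RC h = xL + 4 \<or> (rX RC h = lx qR \<and> h = ly qR) \<or> (rX RC h = lx qC \<and> h = ly qC)"
  unfolding inr_def using w hb hgt by (auto simp: min_def max_def add_divide_distrib diff_divide_distrib split: if_splits; linarith)

lemma LB_SqL: "inr SqL h \<Longrightarrow> xL + 4 \<le> rX SqL h \<Longrightarrow> rX SqL h \<le> xR - 4 \<Longrightarrow> yB + hh \<le> h \<Longrightarrow> h \<le> yT - hh \<Longrightarrow>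
   rX SqL h = xL + 4 \<or> (rX SqL h = lx qR \<and> h = ly qR) \<or> (rX SqL h = lx qC \<and> h = ly qC)"
  unfolding inr_def using w hb hgt by (auto simp: min_def max_def add_divide_distrib diff_divide_distrib split: if_splits; linarith)

lemma LB_qLC: "inr qLC h \<Longrightarrow> xL + 4 \<le> rX qLC h \<Longrightarrow> rX qLC h \<le> xR - 4 \<Longrightarrow> yB + hh \<le> h \<Longrightarrow> h \<le> yT - hh \<Longrightarrow>
   rX qLC h = xL + 4 \<or> (rX qLC h = lx qR \<and> h = ly qR) \<or> (rX qLC h = lx qC \<and> h = ly qC)"
  unfolding inr_def using w hb hgt by (auto simp: min_def max_def add_divide_distrib diff_divide_distrib split: if_splits; linarith)

lemma LB_SqR: "inr SqR h \<Longrightarrow> xL + 4 \<le> rX SqR h \<Longrightarrow> rX SqR h \<le> xR - 4 \<Longrightarrow> yB + hh \<le> h \<Longrightarrow> h \<le> yT - hh \<Longrightarrow>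
   rX SqR h = xL + 4 \<or> (rX SqR h = lx qR \<and> h = ly qR) \<or> (rX SqR h = lx qC \<and> h = ly qC)"
  unfolding inr_def using w hb hgt by (auto simp: min_def max_def add_divide_distrib diff_divide_distrib split: if_splits; linarith)

lemma LB_RqC: "inr RqC h \<Longrightarrow> xL + 4 \<le> rX RqC h \<Longrightarrow> rX RqC h \<le> xR - 4 \<Longrightarrow> yB + hh \<le> h \<Longrightarrow> h \<le> yT - hh \<Longrightarrow>
   rX RqC h = xL + 4 \<or> (rX RqC h = lx qR \<and> h = ly qR) \<or> (rX RqC h = lx qC \<and> h = ly qC)"
  unfolding inr_def using w hb hgt by (auto simp: min_def max_def add_divide_distrib diff_divide_distrib split: if_splits; linarith)

lemma LB_LR: "inr LR h \<Longrightarrow> xL + 4 \<le> rX LR h \<Longrightarrow> rX LR h \<le> xR - 4 \<Longrightarrow> yB + hh \<le> h \<Longrightarrow> h \<le> yT - hh \<Longrightarrow>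
   rX LR h = xL + 4 \<or> (rX LR h = lx qR \<and> h = ly qR) \<or> (rX LR h = lx qC \<and> h = ly qC)"
  unfolding inr_def using w hb hgt by (auto simp: min_def max_def add_divide_distrib diff_divide_distrib split: if_splits; linarith)

lemma LB_LqR: "inr LqR h \<Longrightarrow> xL + 4 \<le> rX LqR h \<Longrightarrow> rX LqR h \<le> xR - 4 \<Longrightarrow> yB + hh \<le> h \<Longrightarrow> h \<le> yT - hh \<Longrightarrow>
   rX LqR h = xL + 4 \<or> (rX LqR h = lx qR \<and> h = ly qR) \<or> (rX LqR h = lx qC \<and> h = ly qC)"
  unfolding inr_def using w hb hgt by (auto simp: min_def max_def add_divide_distrib diff_divide_distrib split: if_splits; linarith)

lemma LB_LqL: "inr LqL h \<Longrightarrow> xL + 4 \<le> rX LqL h \<Longrightarrow> rX LqL h \<le> xR - 4 \<Longrightarrow> yB + hh \<le> h \<Longrightarrow> h \<le> yT - hh \<Longrightarrow>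
   rX LqL h = xL + 4 \<or> (rX LqL h = lx qR \<and> h = ly qR) \<or> (rX LqL h = lx qC \<and> h = ly qC)"
  unfolding inr_def using w hb hgt by (auto simp: min_def max_def add_divide_distrib diff_divide_distrib split: if_splits; linarith)

lemma LB_qCC: "inr qCC h \<Longrightarrow> xL + 4 \<le> rX qCC h \<Longrightarrow> rX qCC h \<le> xR - 4 \<Longrightarrow> yB + hh \<le> h \<Longrightarrow> h \<le> yT - hh \<Longrightarrow>
   rX qCC h = xL + 4 \<or> (rX qCC h = lx qR \<and> h = ly qR) \<or> (rX qCC h = lx qC \<and> h = ly qC)"
  unfolding inr_def using w hb hgt by (auto simp: min_def max_def add_divide_distrib diff_divide_distrib split: if_splits; linarith)

lemma LB_qRR: "inr qRR h \<Longrightarrow> xL + 4 \<le> rX qRR h \<Longrightarrow> rX qRR h \<le> xR - 4 \<Longrightarrow> yB + hh \<le> h \<Longrightarrow> h \<le> yT - hh \<Longrightarrow>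
   rX qRR h = xL + 4 \<or> (rX qRR h = lx qR \<and> h = ly qR) \<or> (rX qRR h = lx qC \<and> h = ly qC)"
  unfolding inr_def using w hb hgt by (auto simp: min_def max_def add_divide_distrib diff_divide_distrib split: if_splits; linarith)


lemmas ok2_all = ok2_LC_LR ok2_LC_LqL ok2_LC_LqR ok2_LC_RC ok2_LC_RqC ok2_LC_SC ok2_LC_SL ok2_LC_SR ok2_LC_SqL ok2_LC_SqR ok2_LC_qCC ok2_LC_qLC ok2_LC_qRR ok2_LR_LqL ok2_LR_LqR ok2_LR_RC ok2_LR_RqC ok2_LR_qCC ok2_LR_qLC ok2_LR_qRR ok2_LqL_RC ok2_LqL_qCC ok2_LqL_qRR ok2_LqR_RC ok2_LqR_RqC ok2_LqR_qLC ok2_RC_RqC ok2_RC_SC ok2_RC_SL ok2_RC_SR ok2_RC_SqL ok2_RC_SqR ok2_RC_qCC ok2_RC_qLC ok2_RC_qRR ok2_RqC_SL ok2_RqC_SR ok2_RqC_SqL ok2_RqC_SqR ok2_RqC_qLC ok2_SC_SL ok2_SC_SR ok2_SL_SR ok2_SL_SqL ok2_SL_SqR ok2_SL_qLC ok2_SR_SqL ok2_SR_SqR ok2_SR_qLC ok2_SqL_SqR ok2_SqL_qLC ok2_SqR_qLC ok2_qCC_qRR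
lemmas okv_all = okv_LC_pR okv_LC_pS okv_LC_qC okv_LC_qL okv_LC_qR okv_LR_pC okv_LR_qC okv_LR_qL okv_LR_qR okv_LqL_pC okv_LqL_pR okv_LqL_qC okv_LqL_qR okv_LqR_pC okv_LqR_pR okv_LqR_qC okv_LqR_qL okv_RC_pL okv_RC_pS okv_RC_qC okv_RC_qL okv_RC_qR okv_RqC_pC okv_RqC_pL okv_RqC_pS okv_RqC_qL okv_RqC_qR okv_SC_pL okv_SC_pR okv_SL_pC okv_SL_pR okv_SL_qC okv_SL_qL okv_SL_qR okv_SR_pC okv_SR_pL okv_SR_qC okv_SR_qL okv_SR_qR okv_SqL_pC okv_SqL_pL okv_SqL_pR okv_SqL_qC okv_SqL_qR okv_SqR_pC okv_SqR_pL okv_SqR_pR okv_SqR_qC okv_SqR_qL okv_qCC_pL okv_qCC_pR okv_qCC_qL okv_qCC_qR okv_qLC_pL okv_qLC_pR okv_qLC_pS okv_qLC_qC okv_qLC_qR okv_qRR_pC okv_qRR_pL okv_qRR_qC okv_qRR_qL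

lemma ok2_frame: "k1 \<in> fset F \<Longrightarrow> k2 \<in> fset F \<Longrightarrow> k1 \<noteq> k2 \<Longrightarrow> ok2 k1 k2 \<or> ok2 k2 k1"
  by (cases F) (auto simp: ok2_all)

lemma okv_frame: "k \<in> fset F \<Longrightarrow> p \<in> fpts F \<Longrightarrow> p \<noteq> src k \<Longrightarrow> p \<noteq> dst k \<Longrightarrow> okv k p"
  by (cases F) (auto simp: okv_all)

lemma LA_all: "inr k h \<Longrightarrow> xL \<le> rX k h \<and> rX k h \<le> xR \<and> yB \<le> h \<and> h \<le> yT"
  by (cases k) (auto dest: LA_SL LA_LC LA_SR LA_RC LA_SqL LA_qLC LA_SqR LA_RqC LA_SC LA_LR LA_LqR LA_LqL LA_qCC LA_qRR)

lemma LC_all: "inr k h \<Longrightarrow> rX k h \<le> xL \<Longrightarrow> h = ly pL \<and> (src k = pL \<or> dst k = pL)"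
  by (cases k) (auto dest: LC_SL LC_LC LC_SR LC_RC LC_SqL LC_qLC LC_SqR LC_RqC LC_SC LC_LR LC_LqR LC_LqL LC_qCC LC_qRR)

lemma LB_all: assumes "k \<noteq> SC" "inr k h" "xL + 4 \<le> rX k h" "rX k h \<le> xR - 4" "yB + hh \<le> h" "h \<le> yT - hh"
  shows "rX k h = xL + 4 \<or> (rX k h = lx qR \<and> h = ly qR) \<or> (rX k h = lx qC \<and> h = ly qC)"
  proof (cases k)
    case SL thus ?thesis using LB_SL[of h] assms by blast
  next
    case LC thus ?thesis using LB_LC[of h] assms by blast
  next
    case SR thus ?thesis using LB_SR[of h] assms by blast
  next
    case RC thus ?thesis using LB_RC[of h] assms by blast
  next
    case SqL thus ?thesis using LB_SqL[of h] assms by blast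
  next
    case qLC thus ?thesis using LB_qLC[of h] assms by blast
  next
    case SqR thus ?thesis using LB_SqR[of h] assms by blast
  next
    case RqC thus ?thesis using LB_RqC[of h] assms by blast
  next
    case LR thus ?thesis using LB_LR[of h] assms by blast
  next
    case LqR thus ?thesis using LB_LqR[of h] assms by blast
  next
    case LqL thus ?thesis using LB_LqL[of h] assms by blast
  next
    case qCC thus ?thesis using LB_qCC[of h] assms by blast
  next
    case qRR thus ?thesis using LB_qRR[of h] assms by blast
  next
    case SC thus ?thesis using assms by simp
  qed

lemma LB_frame: "k \<in> fset F \<Longrightarrow> has_inner F \<Longrightarrow> inr k h \<Longrightarrow> xL + 4 \<le> rX k h \<Longrightarrow> rX k h \<le> xR - 4 \<Longrightarrow> yB + hh \<le> h \<Longrightarrow> h \<le> yT - hh \<Longrightarrow>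
   rX k h = xL + 4 \<or> (rX k h = lx qR \<and> h = ly qR) \<or> (rX k h = lx qC \<and> h = ly qC)"
  apply (rule LB_all)
  apply (cases F) apply (auto simp: has_inner_def)
  done

lemma rX_cont: "continuous_on A (rX k)"
  by (cases k) (auto intro!: continuous_intros)

end



locale fam =
  fixes T L :: nat
  assumes T1: "1 \<le> T"
begin

definition tb :: "nat \<Rightarrow> nat" where "tb i = 3*i"
definition tm :: "nat \<Rightarrow> nat" where "tm i = 3*i+1"
definition tt :: "nat \<Rightarrow> nat" where "tt i = 3*i+2"
definition ls :: "nat \<Rightarrow> nat" where "ls k = 3*T + 4*k"
definition lt :: "nat \<Rightarrow> nat" where "lt k = 3*T + 4*k + 1"
definition la :: "nat \<Rightarrow> nat" where "la k = 3*T + 4*k + 2"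
definition lb :: "nat \<Rightarrow> nat" where "lb k = 3*T + 4*k + 3"

lemma enc_inj[simp]:
  "tb i = tb j \<longleftrightarrow> i = j" "tm i = tm j \<longleftrightarrow> i = j" "tt i = tt j \<longleftrightarrow> i = j"
  "ls i = ls j \<longleftrightarrow> i = j" "lt i = lt j \<longleftrightarrow> i = j" "la i = la j \<longleftrightarrow> i = j" "lb i = lb j \<longleftrightarrow> i = j"
  unfolding tb_def tm_def tt_def ls_def lt_def la_def lb_def by auto

lemma enc_ne[simp]:
  "tb i \<noteq> tm j" "tb i \<noteq> tt j" "tm i \<noteq> tt j" "tm i \<noteq> tb j" "tt i \<noteq> tb j" "tt i \<noteq> tm j"
  "ls i \<noteq> lt j" "ls i \<noteq> la j" "ls i \<noteq> lb j" "lt i \<noteq> la j" "lt i \<noteq> lb j" "la i \<noteq> lb j"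
  "lt i \<noteq> ls j" "la i \<noteq> ls j" "lb i \<noteq> ls j" "la i \<noteq> lt j" "lb i \<noteq> lt j" "lb i \<noteq> la j"
  unfolding tb_def tm_def tt_def ls_def lt_def la_def lb_def by presburger+

lemma tri_lt: "i < T \<Longrightarrow> tb i < 3*T" "i < T \<Longrightarrow> tm i < 3*T" "i < T \<Longrightarrow> tt i < 3*T"
  unfolding tb_def tm_def tt_def by auto
lemma lev_ge: "3*T \<le> ls k" "3*T \<le> lt k" "3*T \<le> la k" "3*T \<le> lb k"
  unfolding ls_def lt_def la_def lb_def by auto

lemma tri_lev_ne[simp]:
  "i < T \<Longrightarrow> tb i \<noteq> ls k" "i < T \<Longrightarrow> tb i \<noteq> lt k" "i < T \<Longrightarrow> tb i \<noteq> la k" "i < T \<Longrightarrow> tb i \<noteq> lb k"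
  "i < T \<Longrightarrow> tm i \<noteq> ls k" "i < T \<Longrightarrow> tm i \<noteq> lt k" "i < T \<Longrightarrow> tm i \<noteq> la k" "i < T \<Longrightarrow> tm i \<noteq> lb k"
  "i < T \<Longrightarrow> tt i \<noteq> ls k" "i < T \<Longrightarrow> tt i \<noteq> lt k" "i < T \<Longrightarrow> tt i \<noteq> la k" "i < T \<Longrightarrow> tt i \<noteq> lb k"
  "i < T \<Longrightarrow> ls k \<noteq> tb i" "i < T \<Longrightarrow> lt k \<noteq> tb i" "i < T \<Longrightarrow> la k \<noteq> tb i" "i < T \<Longrightarrow> lb k \<noteq> tb i"
  "i < T \<Longrightarrow> ls k \<noteq> tm i" "i < T \<Longrightarrow> lt k \<noteq> tm i" "i < T \<Longrightarrow> la k \<noteq> tm i" "i < T \<Longrightarrow> lb k \<noteq> tm i"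
  "i < T \<Longrightarrow> ls k \<noteq> tt i" "i < T \<Longrightarrow> lt k \<noteq> tt i" "i < T \<Longrightarrow> la k \<noteq> tt i" "i < T \<Longrightarrow> lb k \<noteq> tt i"
  unfolding tb_def tm_def tt_def ls_def lt_def la_def lb_def by simp_all

definition V :: "nat set" where "V = {0..<3*T + 4*L}"

definition EK1 :: "nat \<times> nat \<Rightarrow> nat \<Rightarrow> rk \<Rightarrow> bool" where
  "EK1 e j \<kappa> \<longleftrightarrow> (\<exists>i. i < T \<and> j = i \<and> ((e = (tb i, tm i) \<and> \<kappa> = LR) \<or> (e = (tm i, tt i) \<and> \<kappa> = RC) \<or> (e = (tb i, tt i) \<and> \<kappa> = LC)))"
definition EK2 :: "nat \<times> nat \<Rightarrow> nat \<Rightarrow> rk \<Rightarrow> bool" where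
  "EK2 e j \<kappa> \<longleftrightarrow> (\<exists>i. Suc i < T \<and> j = i \<and> ((e = (tb i, tm (Suc i)) \<and> \<kappa> = LqR) \<or> (e = (tm i, tt (Suc i)) \<and> \<kappa> = RqC)
        \<or> (e = (tb (Suc i), tt i) \<and> \<kappa> = qLC)))"
definition EK3 :: "nat \<times> nat \<Rightarrow> nat \<Rightarrow> rk \<Rightarrow> bool" where
  "EK3 e j \<kappa> \<longleftrightarrow> (0 < L \<and> j = T - 1 \<and> ((e = (tb (T-1), la 0) \<and> \<kappa> = LqL) \<or> (e = (lt 0, tt (T-1)) \<and> \<kappa> = qCC)
        \<or> (e = (lb 0, tm (T-1)) \<and> \<kappa> = qRR)))"
definition EK4 :: "nat \<times> nat \<Rightarrow> nat \<Rightarrow> rk \<Rightarrow> bool" where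
  "EK4 e j \<kappa> \<longleftrightarrow> (\<exists>k. k < L \<and> j = T + k \<and> ((e = (ls k, la k) \<and> \<kappa> = SL) \<or> (e = (la k, lt k) \<and> \<kappa> = LC)
        \<or> (e = (ls k, lb k) \<and> \<kappa> = SR) \<or> (e = (lb k, lt k) \<and> \<kappa> = RC)))"
definition EK5 :: "nat \<times> nat \<Rightarrow> nat \<Rightarrow> rk \<Rightarrow> bool" where
  "EK5 e j \<kappa> \<longleftrightarrow> (\<exists>k. Suc k < L \<and> j = T + k \<and> ((e = (ls k, la (Suc k)) \<and> \<kappa> = SqL) \<or> (e = (la (Suc k), lt k) \<and> \<kappa> = qLC)
        \<or> (e = (ls k, lb (Suc k)) \<and> \<kappa> = SqR) \<or> (e = (lb k, lt (Suc k)) \<and> \<kappa> = RqC)))"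
definition EK6 :: "nat \<times> nat \<Rightarrow> nat \<Rightarrow> rk \<Rightarrow> bool" where
  "EK6 e j \<kappa> \<longleftrightarrow> (0 < L \<and> j = T + L - 1 \<and> e = (ls (L-1), lt (L-1)) \<and> \<kappa> = SC)"

definition EK :: "nat \<times> nat \<Rightarrow> nat \<Rightarrow> rk \<Rightarrow> bool" where
  "EK e j \<kappa> \<longleftrightarrow> EK1 e j \<kappa> \<or> EK2 e j \<kappa> \<or> EK3 e j \<kappa> \<or> EK4 e j \<kappa> \<or> EK5 e j \<kappa> \<or> EK6 e j \<kappa>"

definition E :: "(nat \<times> nat) set" where "E = {e. \<exists>j \<kappa>. EK e j \<kappa>}"

lemma EK_intros:
  "i < T \<Longrightarrow> EK (tb i, tm i) i LR" "i < T \<Longrightarrow> EK (tm i, tt i) i RC" "i < T \<Longrightarrow> EK (tb i, tt i) i LC"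
  "Suc i < T \<Longrightarrow> EK (tb i, tm (Suc i)) i LqR" "Suc i < T \<Longrightarrow> EK (tm i, tt (Suc i)) i RqC"
  "Suc i < T \<Longrightarrow> EK (tb (Suc i), tt i) i qLC"
  "0 < L \<Longrightarrow> EK (tb (T-1), la 0) (T-1) LqL" "0 < L \<Longrightarrow> EK (lt 0, tt (T-1)) (T-1) qCC"
  "0 < L \<Longrightarrow> EK (lb 0, tm (T-1)) (T-1) qRR"
  "k < L \<Longrightarrow> EK (ls k, la k) (T+k) SL" "k < L \<Longrightarrow> EK (la k, lt k) (T+k) LC"
  "k < L \<Longrightarrow> EK (ls k, lb k) (T+k) SR" "k < L \<Longrightarrow> EK (lb k, lt k) (T+k) RC"
  "Suc k < L \<Longrightarrow> EK (ls k, la (Suc k)) (T+k) SqL" "Suc k < L \<Longrightarrow> EK (la (Suc k), lt k) (T+k) qLC"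
  "Suc k < L \<Longrightarrow> EK (ls k, lb (Suc k)) (T+k) SqR" "Suc k < L \<Longrightarrow> EK (lb k, lt (Suc k)) (T+k) RqC"
  "0 < L \<Longrightarrow> EK (ls (L-1), lt (L-1)) (T+L-1) SC"
  unfolding EK_def EK1_def EK2_def EK3_def EK4_def EK5_def EK6_def by simp_all

lemma E_intros:
  "i < T \<Longrightarrow> (tb i, tm i) \<in> E" "i < T \<Longrightarrow> (tm i, tt i) \<in> E" "i < T \<Longrightarrow> (tb i, tt i) \<in> E"
  "Suc i < T \<Longrightarrow> (tb i, tm (Suc i)) \<in> E" "Suc i < T \<Longrightarrow> (tm i, tt (Suc i)) \<in> E" "Suc i < T \<Longrightarrow> (tb (Suc i), tt i) \<in> E"
  "0 < L \<Longrightarrow> (tb (T-1), la 0) \<in> E" "0 < L \<Longrightarrow> (lt 0, tt (T-1)) \<in> E" "0 < L \<Longrightarrow> (lb 0, tm (T-1)) \<in> E"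
  "k < L \<Longrightarrow> (ls k, la k) \<in> E" "k < L \<Longrightarrow> (la k, lt k) \<in> E" "k < L \<Longrightarrow> (ls k, lb k) \<in> E" "k < L \<Longrightarrow> (lb k, lt k) \<in> E"
  "Suc k < L \<Longrightarrow> (ls k, la (Suc k)) \<in> E" "Suc k < L \<Longrightarrow> (la (Suc k), lt k) \<in> E"
  "Suc k < L \<Longrightarrow> (ls k, lb (Suc k)) \<in> E" "Suc k < L \<Longrightarrow> (lb k, lt (Suc k)) \<in> E"
  "0 < L \<Longrightarrow> (ls (L-1), lt (L-1)) \<in> E"
  unfolding E_def using EK_intros by blast+

lemma E_cases:
  assumes "e \<in> E"
  obtains (t1) i where "i < T" "e = (tb i, tm i)" | (t2) i where "i < T" "e = (tm i, tt i)"
    | (t3) i where "i < T" "e = (tb i, tt i)"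
    | (r1) i where "Suc i < T" "e = (tb i, tm (Suc i))" | (r2) i where "Suc i < T" "e = (tm i, tt (Suc i))"
    | (r3) i where "Suc i < T" "e = (tb (Suc i), tt i)"
    | (j1) "0 < L" "e = (tb (T-1), la 0)" | (j2) "0 < L" "e = (lt 0, tt (T-1))" | (j3) "0 < L" "e = (lb 0, tm (T-1))"
    | (l1) k where "k < L" "e = (ls k, la k)" | (l2) k where "k < L" "e = (la k, lt k)"
    | (l3) k where "k < L" "e = (ls k, lb k)" | (l4) k where "k < L" "e = (lb k, lt k)"
    | (m1) k where "Suc k < L" "e = (ls k, la (Suc k))" | (m2) k where "Suc k < L" "e = (la (Suc k), lt k)"
    | (m3) k where "Suc k < L" "e = (ls k, lb (Suc k))" | (m4) k where "Suc k < L" "e = (lb k, lt (Suc k))"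
    | (ch) "0 < L" "e = (ls (L-1), lt (L-1))"
proof -
  obtain j \<kappa> where "EK e j \<kappa>" using assms unfolding E_def by blast
  then consider "EK1 e j \<kappa>" | "EK2 e j \<kappa>" | "EK3 e j \<kappa>" | "EK4 e j \<kappa>" | "EK5 e j \<kappa>" | "EK6 e j \<kappa>"
    unfolding EK_def by blast
  thus thesis
  proof cases
    case 1 thus thesis unfolding EK1_def using that(1-3) by blast
  next
    case 2 thus thesis unfolding EK2_def using that(4-6) by blast
  next
    case 3 thus thesis unfolding EK3_def using that(7-9) by blast
  next
    case 4 thus thesis unfolding EK4_def using that(10-13) by blast
  next
    case 5 thus thesis unfolding EK5_def using that(14-17) by blast
  next
    case 6 thus thesis unfolding EK6_def using that(18) by blast
  qed
qed

lemma in_V: "i < T \<Longrightarrow> tb i \<in> V" "i < T \<Longrightarrow> tm i \<in> V" "i < T \<Longrightarrow> tt i \<in> V"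
  "k < L \<Longrightarrow> ls k \<in> V" "k < L \<Longrightarrow> lt k \<in> V" "k < L \<Longrightarrow> la k \<in> V" "k < L \<Longrightarrow> lb k \<in> V"
  unfolding V_def tb_def tm_def tt_def ls_def lt_def la_def lb_def by auto

lemma V_cases:
  assumes "v \<in> V"
  obtains (b) i where "i < T" "v = tb i" | (m) i where "i < T" "v = tm i" | (t) i where "i < T" "v = tt i"
    | (s) k where "k < L" "v = ls k" | (lt) k where "k < L" "v = lt k" | (a) k where "k < L" "v = la k"
    | (lb) k where "k < L" "v = lb k"
proof (cases "v < 3*T")
  case True
  define i where "i = v div 3"
  have i: "i < T" using True unfolding i_def by auto
  have "v mod 3 = 0 \<or> v mod 3 = 1 \<or> v mod 3 = 2" by auto
  moreover have "v = 3*i + v mod 3" unfolding i_def by simp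
  ultimately consider "v = tb i" | "v = tm i" | "v = tt i" unfolding tb_def tm_def tt_def by linarith
  thus ?thesis using that(1-3) i by metis
next
  case False
  define k where "k = (v - 3*T) div 4"
  have v: "v < 3*T + 4*L" using assms unfolding V_def by auto
  have k: "k < L" using False v unfolding k_def by auto
  have "(v - 3*T) mod 4 = 0 \<or> (v - 3*T) mod 4 = 1 \<or> (v - 3*T) mod 4 = 2 \<or> (v - 3*T) mod 4 = 3" by auto
  moreover have "v = 3*T + 4*k + (v - 3*T) mod 4" using False unfolding k_def by simp
  ultimately consider "v = ls k" | "v = lt k" | "v = la k" | "v = lb k" unfolding ls_def lt_def la_def lb_def by linarith
  thus ?thesis using that(4-7) k by metis
qed

lemma E_sub: "E \<subseteq> V \<times> V"
proof
  fix e assume "e \<in> E"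
  thus "e \<in> V \<times> V"
  proof (cases rule: E_cases)
  qed (use T1 in \<open>auto intro: in_V\<close>)
qed


definition rank :: "nat \<Rightarrow> nat" where
  "rank v = (if v < 3*T then (if v mod 3 = 0 then 0 else if v mod 3 = 2 then 3
                              else if v div 3 = T - 1 \<and> 0 < L then 2 else 1)
             else (if (v - 3*T) mod 4 = 0 then 0 else if (v - 3*T) mod 4 = 1 then 2 else 1))"

lemma rank_simps:
  "i < T \<Longrightarrow> rank (tb i) = 0" "i < T \<Longrightarrow> rank (tt i) = 3"
  "i < T \<Longrightarrow> rank (tm i) = (if i = T - 1 \<and> 0 < L then 2 else 1)"
  "rank (ls k) = 0" "rank (lt k) = 2" "rank (la k) = 1" "rank (lb k) = 1"
proof -
  have a: "(3*i+2) mod 3 = 2" "(3*i+1) mod 3 = 1" "(3*i) mod 3 = 0" "(3*i+1) div 3 = i" for i :: nat by presburger+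
  have b: "(4*k+1) mod 4 = 1" "(4*k+2) mod 4 = 2" "(4*k+3) mod 4 = 3" "(4*k) mod 4 = 0" for k :: nat by presburger+
  have c: "\<not> ls k < 3*T" "\<not> lt k < 3*T" "\<not> la k < 3*T" "\<not> lb k < 3*T"
    "ls k - 3*T = 4*k" "lt k - 3*T = 4*k+1" "la k - 3*T = 4*k+2" "lb k - 3*T = 4*k+3"
    unfolding ls_def lt_def la_def lb_def by auto
  show "rank (ls k) = 0" "rank (lt k) = 2" "rank (la k) = 1" "rank (lb k) = 1"
    unfolding rank_def by (simp_all only: c b if_False) simp_all
  show "i < T \<Longrightarrow> rank (tb i) = 0" "i < T \<Longrightarrow> rank (tt i) = 3"
    "i < T \<Longrightarrow> rank (tm i) = (if i = T - 1 \<and> 0 < L then 2 else 1)"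
    unfolding rank_def tb_def tm_def tt_def by (simp_all only: a) auto
qed

lemma rank_edge: "e \<in> E \<Longrightarrow> rank (fst e) < rank (snd e)"
proof (cases rule: E_cases)
qed (use T1 in \<open>auto simp: rank_simps\<close>)

lemma rank_le3: "v \<in> V \<Longrightarrow> rank v \<le> 3"
  unfolding rank_def by auto

lemma trancl_rank: "(x,y) \<in> E\<^sup>+ \<Longrightarrow> rank x < rank y"
proof (induction rule: trancl_induct)
  case (base y) thus ?case using rank_edge by fastforce
next
  case (step y z) thus ?case using rank_edge[of "(y,z)"] by simp
qed

lemma acyc: "acyclic E"
  unfolding acyclic_def using trancl_rank by blast

lemma finV: "finite V" unfolding V_def by simp
lemma cardV: "card V = 3*T + 4*L" unfolding V_def by simp

lemma is_dag: "is_dag V E"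
  unfolding is_dag_def using finV E_sub acyc by blast

lemma path_len: assumes "dir_path V E xs" shows "length xs - 1 \<le> 5"
proof -
  have ne: "xs \<noteq> []" and sub: "set xs \<subseteq> V" and ed: "\<forall>i. Suc i < length xs \<longrightarrow> (xs ! i, xs ! Suc i) \<in> E"
    using assms unfolding dir_path_def by auto
  have r: "rank (xs ! 0) + i \<le> rank (xs ! i)" if "i < length xs" for i
    using that
  proof (induction i)
    case 0 thus ?case by simp
  next
    case (Suc i)
    have "rank (xs ! i) < rank (xs ! Suc i)" using rank_edge[OF ed[rule_format, OF Suc.prems]] by simp
    thus ?case using Suc by simp
  qed
  have "length xs - 1 < length xs" using ne by simp
  hence "length xs - 1 \<le> rank (xs ! (length xs - 1))" using r[of "length xs - 1"] by simp
  also have "\<dots> \<le> 3" using rank_le3 sub ne by (metis \<open>length xs - 1 < length xs\<close> nth_mem subsetD)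
  finally show ?thesis by simp
qed

lemma card4: "card {a,b,c,d::'x} \<le> 4"
  by (auto simp: card_insert_if)

lemma deg_le: assumes "{e \<in> E. fst e = v \<or> snd e = v} \<subseteq> {a,b,c,d}" shows "degree E v \<le> 4"
  unfolding degree_def using card_mono[OF _ assms] card4[of a b c d] by (meson finite.emptyI finite.insertI le_trans)

lemma degree4: assumes "v \<in> V" shows "degree E v \<le> 4"
  using assms
proof (cases rule: V_cases)
  case (b i)
  show ?thesis unfolding b(2)
  proof (rule deg_le[of _ "(tb i, tm i)" "(tb i, tt i)" "(tb i, if Suc i < T then tm (Suc i) else la 0)" "(tb i, tt (i - 1))"])
    show "{e \<in> E. fst e = tb i \<or> snd e = tb i} \<subseteq> {(tb i, tm i), (tb i, tt i), (tb i, if Suc i < T then tm (Suc i) else la 0), (tb i, tt (i - 1))}"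
    proof
      fix e assume "e \<in> {e \<in> E. fst e = tb i \<or> snd e = tb i}"
      hence "e \<in> E" "fst e = tb i \<or> snd e = tb i" by auto
      thus "e \<in> {(tb i, tm i), (tb i, tt i), (tb i, if Suc i < T then tm (Suc i) else la 0), (tb i, tt (i - 1))}"
        by (cases rule: E_cases) (use b(1) T1 in auto)
    qed
  qed
next
  case (m i)
  show ?thesis unfolding m(2)
  proof (rule deg_le[of _ "(tb i, tm i)" "(tm i, tt i)" "(tb (i-1), tm i)" "if Suc i < T then (tm i, tt (Suc i)) else (lb 0, tm i)"])
    show "{e \<in> E. fst e = tm i \<or> snd e = tm i} \<subseteq> {(tb i, tm i), (tm i, tt i), (tb (i-1), tm i), if Suc i < T then (tm i, tt (Suc i)) else (lb 0, tm i)}"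
    proof
      fix e assume "e \<in> {e \<in> E. fst e = tm i \<or> snd e = tm i}"
      hence "e \<in> E" "fst e = tm i \<or> snd e = tm i" by auto
      thus "e \<in> {(tb i, tm i), (tm i, tt i), (tb (i-1), tm i), if Suc i < T then (tm i, tt (Suc i)) else (lb 0, tm i)}"
        by (cases rule: E_cases) (use m(1) T1 in auto)
    qed
  qed
next
  case (t i)
  show ?thesis unfolding t(2)
  proof (rule deg_le[of _ "(tm i, tt i)" "(tb i, tt i)" "(tm (i-1), tt i)" "if Suc i < T then (tb (Suc i), tt i) else (lt 0, tt i)"])
    show "{e \<in> E. fst e = tt i \<or> snd e = tt i} \<subseteq> {(tm i, tt i), (tb i, tt i), (tm (i-1), tt i), if Suc i < T then (tb (Suc i), tt i) else (lt 0, tt i)}"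
    proof
      fix e assume "e \<in> {e \<in> E. fst e = tt i \<or> snd e = tt i}"
      hence "e \<in> E" "fst e = tt i \<or> snd e = tt i" by auto
      thus "e \<in> {(tm i, tt i), (tb i, tt i), (tm (i-1), tt i), if Suc i < T then (tb (Suc i), tt i) else (lt 0, tt i)}"
        by (cases rule: E_cases) (use t(1) T1 in auto)
    qed
  qed
next
  case (s k)
  show ?thesis unfolding s(2)
  proof (rule deg_le[of _ "(ls k, la k)" "(ls k, lb k)" "(ls k, if Suc k < L then la (Suc k) else lt k)" "(ls k, lb (Suc k))"])
    show "{e \<in> E. fst e = ls k \<or> snd e = ls k} \<subseteq> {(ls k, la k), (ls k, lb k), (ls k, if Suc k < L then la (Suc k) else lt k), (ls k, lb (Suc k))}"
    proof
      fix e assume "e \<in> {e \<in> E. fst e = ls k \<or> snd e = ls k}"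
      hence "e \<in> E" "fst e = ls k \<or> snd e = ls k" by auto
      thus "e \<in> {(ls k, la k), (ls k, lb k), (ls k, if Suc k < L then la (Suc k) else lt k), (ls k, lb (Suc k))}"
        by (cases rule: E_cases) (use s(1) T1 in auto)
    qed
  qed
next
  case (lt k)
  show ?thesis unfolding lt(2)
  proof (rule deg_le[of _ "(la k, lt k)" "(lb k, lt k)" "if Suc k < L then (la (Suc k), lt k) else (ls k, lt k)" "if k = 0 then (lt 0, tt (T-1)) else (lb (k-1), lt k)"])
    show "{e \<in> E. fst e = lt k \<or> snd e = lt k} \<subseteq> {(la k, lt k), (lb k, lt k), if Suc k < L then (la (Suc k), lt k) else (ls k, lt k), if k = 0 then (lt 0, tt (T-1)) else (lb (k-1), lt k)}"
    proof
      fix e assume "e \<in> {e \<in> E. fst e = lt k \<or> snd e = lt k}"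
      hence "e \<in> E" "fst e = lt k \<or> snd e = lt k" by auto
      thus "e \<in> {(la k, lt k), (lb k, lt k), if Suc k < L then (la (Suc k), lt k) else (ls k, lt k), if k = 0 then (lt 0, tt (T-1)) else (lb (k-1), lt k)}"
        by (cases rule: E_cases) (use lt(1) T1 in auto)
    qed
  qed
next
  case (a k)
  show ?thesis unfolding a(2)
  proof (rule deg_le[of _ "(ls k, la k)" "(la k, lt k)" "if k = 0 then (tb (T-1), la 0) else (ls (k-1), la k)" "(la k, lt (k-1))"])
    show "{e \<in> E. fst e = la k \<or> snd e = la k} \<subseteq> {(ls k, la k), (la k, lt k), if k = 0 then (tb (T-1), la 0) else (ls (k-1), la k), (la k, lt (k-1))}"
    proof
      fix e assume "e \<in> {e \<in> E. fst e = la k \<or> snd e = la k}"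
      hence "e \<in> E" "fst e = la k \<or> snd e = la k" by auto
      thus "e \<in> {(ls k, la k), (la k, lt k), if k = 0 then (tb (T-1), la 0) else (ls (k-1), la k), (la k, lt (k-1))}"
        by (cases rule: E_cases) (use a(1) T1 in auto)
    qed
  qed
next
  case (lb k)
  show ?thesis unfolding lb(2)
  proof (rule deg_le[of _ "(ls k, lb k)" "(lb k, lt k)" "if k = 0 then (lb 0, tm (T-1)) else (ls (k-1), lb k)" "(lb k, lt (Suc k))"])
    show "{e \<in> E. fst e = lb k \<or> snd e = lb k} \<subseteq> {(ls k, lb k), (lb k, lt k), if k = 0 then (lb 0, tm (T-1)) else (ls (k-1), lb k), (lb k, lt (Suc k))}"
    proof
      fix e assume "e \<in> {e \<in> E. fst e = lb k \<or> snd e = lb k}"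
      hence "e \<in> E" "fst e = lb k \<or> snd e = lb k" by auto
      thus "e \<in> {(ls k, lb k), (lb k, lt k), if k = 0 then (lb 0, tm (T-1)) else (ls (k-1), lb k), (lb k, lt (Suc k))}"
        by (cases rule: E_cases) (use lb(1) T1 in auto)
    qed
  qed
qed


lemma three_pairs:
  assumes fin: "finite S" and cS: "card S \<le> 2"
    and dx: "x1 \<noteq> x2" "x1 \<noteq> x3" "x2 \<noteq> x3" and dy: "y1 \<noteq> y2" "y1 \<noteq> y3" "y2 \<noteq> y3"
    and dxy: "x1 \<noteq> y2" "x1 \<noteq> y3" "x2 \<noteq> y1" "x2 \<noteq> y3" "x3 \<noteq> y1" "x3 \<noteq> y2"
  shows "(x1 \<notin> S \<and> y1 \<notin> S) \<or> (x2 \<notin> S \<and> y2 \<notin> S) \<or> (x3 \<notin> S \<and> y3 \<notin> S)"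
proof (rule ccontr)
  assume "\<not> ?thesis"
  then obtain s1 s2 s3 where s: "s1 \<in> S" "s2 \<in> S" "s3 \<in> S" "s1 = x1 \<or> s1 = y1" "s2 = x2 \<or> s2 = y2" "s3 = x3 \<or> s3 = y3"
    by blast
  have d: "s1 \<noteq> s2" "s1 \<noteq> s3" "s2 \<noteq> s3" using s(4-6) dx dy dxy by auto
  have "card {s1,s2,s3} = 3" using d by simp
  moreover have "card {s1,s2,s3} \<le> card S" by (rule card_mono[OF fin]) (use s in auto)
  ultimately show False using cS by simp
qed

context
  fixes S :: "nat set"
  assumes SV: "S \<subseteq> V" and cS: "card S \<le> 2"
begin

definition W where "W = V - S"
definition R where "R = {(u,v). u \<in> W \<and> v \<in> W \<and> und_adj E u v}"

lemma finS: "finite S" using finV SV finite_subset by blast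

lemma two_elem: assumes "x \<in> S" "y \<in> S" "x \<noteq> y" shows "S = {x,y}"
proof -
  have sub: "{x,y} \<subseteq> S" using assms by auto
  have "card {x,y} = 2" using assms(3) by simp
  hence "card S \<le> card {x,y}" using cS by simp
  thus ?thesis using card_seteq[OF finS sub] by simp
qed

lemma symR: "sym R" unfolding sym_def R_def und_adj_def by auto

lemma Rstar_sym: "(u,v) \<in> R\<^sup>* \<Longrightarrow> (v,u) \<in> R\<^sup>*"
  using symR sym_rtrancl unfolding sym_def by blast

lemma adjR: assumes "(u,v) \<in> E \<or> (v,u) \<in> E" "u \<notin> S" "v \<notin> S" shows "(u,v) \<in> R\<^sup>*"
proof -
  have "u \<in> V" "v \<in> V" using assms(1) E_sub by auto
  hence "(u,v) \<in> R" using assms unfolding R_def W_def und_adj_def by auto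
  thus ?thesis by simp
qed

definition good :: "nat \<Rightarrow> bool" where
  "good x \<longleftrightarrow> (\<exists>r. r \<in> {tb 0, tm 0, tt 0} \<and> r \<notin> S \<and> (x, r) \<in> R\<^sup>*)"

lemma good_step: "(x,y) \<in> R\<^sup>* \<Longrightarrow> good y \<Longrightarrow> good x"
  unfolding good_def by (meson rtrancl_trans)

lemma good_adj: "(x,y) \<in> E \<or> (y,x) \<in> E \<Longrightarrow> x \<notin> S \<Longrightarrow> y \<notin> S \<Longrightarrow> good y \<Longrightarrow> good x"
  using good_step adjR by blast

lemma T0: "0 < T" using T1 by simp

lemma tri_good: "i < T \<Longrightarrow> x \<in> {tb i, tm i, tt i} \<Longrightarrow> x \<notin> S \<Longrightarrow> good x"
proof (induction i arbitrary: x)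
  case 0 thus ?case unfolding good_def by blast
next
  case (Suc i)
  have i: "i < T" "Suc i < T" using Suc.prems by auto
  have e1: "(tb (Suc i), tt i) \<in> E" "(tb i, tm (Suc i)) \<in> E" "(tm i, tt (Suc i)) \<in> E" using E_intros i by auto
  have "(tb (Suc i) \<notin> S \<and> tt i \<notin> S) \<or> (tm (Suc i) \<notin> S \<and> tb i \<notin> S) \<or> (tt (Suc i) \<notin> S \<and> tm i \<notin> S)"
    by (rule three_pairs[OF finS cS]) auto
  then obtain x' y' where xy: "x' \<in> {tb (Suc i), tm (Suc i), tt (Suc i)}" "y' \<in> {tb i, tm i, tt i}"
    "x' \<notin> S" "y' \<notin> S" "(x',y') \<in> E \<or> (y',x') \<in> E" using e1 by blast
  have gy: "good y'" using Suc.IH[OF i(1) xy(2) xy(4)] .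
  have gx': "good x'" by (rule good_adj[OF xy(5) xy(3) xy(4) gy])
  have tri: "(tb (Suc i), tm (Suc i)) \<in> E" "(tm (Suc i), tt (Suc i)) \<in> E" "(tb (Suc i), tt (Suc i)) \<in> E"
    using E_intros i by auto
  show ?case
  proof (cases "x = x'")
    case True thus ?thesis using gx' by simp
  next
    case False
    have "(x, x') \<in> E \<or> (x', x) \<in> E" using False Suc.prems(2) xy(1) tri by auto
    thus ?thesis using good_adj Suc.prems(3) xy(3) gx' by blast
  qed
qed


lemma cyc:
  assumes k: "k < L" and nA: "\<not> (ls k \<in> S \<and> lt k \<in> S)" and nB: "\<not> (la k \<in> S \<and> lb k \<in> S)"
    and x: "x \<in> {ls k, lt k, la k, lb k}" "x \<notin> S" and z: "z \<in> {ls k, lt k, la k, lb k}" "z \<notin> S"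
  shows "(x,z) \<in> R\<^sup>*"
proof -
  have e: "(ls k, la k) \<in> E" "(la k, lt k) \<in> E" "(ls k, lb k) \<in> E" "(lb k, lt k) \<in> E" using E_intros k by auto
  have adj: "(u,v) \<in> R\<^sup>*" if "(u,v) \<in> E \<or> (v,u) \<in> E" "u \<notin> S" "v \<notin> S" for u v using adjR that .
  have st: "(ls k, lt k) \<in> R\<^sup>*" if "ls k \<notin> S" "lt k \<notin> S"
  proof (cases "la k \<in> S")
    case True hence "lb k \<notin> S" using nB by auto
    thus ?thesis using adj[of "ls k" "lb k"] adj[of "lb k" "lt k"] e that by (meson rtrancl_trans)
  next
    case False
    thus ?thesis using adj[of "ls k" "la k"] adj[of "la k" "lt k"] e that by (meson rtrancl_trans)
  qed
  have ab: "(la k, lb k) \<in> R\<^sup>*" if "la k \<notin> S" "lb k \<notin> S"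
  proof (cases "ls k \<in> S")
    case True hence "lt k \<notin> S" using nA by auto
    thus ?thesis using adj[of "la k" "lt k"] adj[of "lt k" "lb k"] e that by (meson rtrancl_trans)
  next
    case False
    thus ?thesis using adj[of "la k" "ls k"] adj[of "ls k" "lb k"] e that by (meson rtrancl_trans)
  qed
  have f: "ls k \<notin> S \<Longrightarrow> la k \<notin> S \<Longrightarrow> (ls k, la k) \<in> R\<^sup>*" "ls k \<notin> S \<Longrightarrow> la k \<notin> S \<Longrightarrow> (la k, ls k) \<in> R\<^sup>*"
    "la k \<notin> S \<Longrightarrow> lt k \<notin> S \<Longrightarrow> (la k, lt k) \<in> R\<^sup>*" "la k \<notin> S \<Longrightarrow> lt k \<notin> S \<Longrightarrow> (lt k, la k) \<in> R\<^sup>*"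
    "ls k \<notin> S \<Longrightarrow> lb k \<notin> S \<Longrightarrow> (ls k, lb k) \<in> R\<^sup>*" "ls k \<notin> S \<Longrightarrow> lb k \<notin> S \<Longrightarrow> (lb k, ls k) \<in> R\<^sup>*"
    "lb k \<notin> S \<Longrightarrow> lt k \<notin> S \<Longrightarrow> (lb k, lt k) \<in> R\<^sup>*" "lb k \<notin> S \<Longrightarrow> lt k \<notin> S \<Longrightarrow> (lt k, lb k) \<in> R\<^sup>*"
    using adj e by blast+
  have g: "ls k \<notin> S \<Longrightarrow> lt k \<notin> S \<Longrightarrow> (lt k, ls k) \<in> R\<^sup>*" "la k \<notin> S \<Longrightarrow> lb k \<notin> S \<Longrightarrow> (lb k, la k) \<in> R\<^sup>*"
    using st ab Rstar_sym by blast+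
  have "x = ls k \<or> x = lt k \<or> x = la k \<or> x = lb k" using x(1) by simp
  moreover have "z = ls k \<or> z = lt k \<or> z = la k \<or> z = lb k" using z(1) by simp
  ultimately show ?thesis using x(2) z(2) f g st ab by (elim disjE) simp_all
qed

lemma lev_good: "k < L \<Longrightarrow> x \<in> {ls k, lt k, la k, lb k} \<Longrightarrow> x \<notin> S \<Longrightarrow> good x"
proof (induction k arbitrary: x)
  case 0
  have L: "0 < L" using 0 by simp
  have T': "T - 1 < T" using T1 by simp
  have pg: "good y" if "y \<in> {tb (T-1), tm (T-1), tt (T-1)}" "y \<notin> S" for y using tri_good[OF T' that] .
  have d: "(tb (T-1), la 0) \<in> E" "(lb 0, tm (T-1)) \<in> E" "(lt 0, tt (T-1)) \<in> E" using E_intros L by auto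
  have ga: "good (la 0)" if "la 0 \<notin> S" "tb (T-1) \<notin> S" using good_adj[of "la 0" "tb (T-1)"] d pg that by blast
  have gb: "good (lb 0)" if "lb 0 \<notin> S" "tm (T-1) \<notin> S" using good_adj[of "lb 0" "tm (T-1)"] d pg that by blast
  have gt: "good (lt 0)" if "lt 0 \<notin> S" "tt (T-1) \<notin> S" using good_adj[of "lt 0" "tt (T-1)"] d pg that by blast
  show ?case
  proof (cases "ls 0 \<in> S \<and> lt 0 \<in> S")
    case True
    hence S: "S = {ls 0, lt 0}"
      using two_elem enc_ne(7) by blast
    show ?thesis using 0 S ga gb T' by auto
  next
    case nA: False
    show ?thesis
    proof (cases "la 0 \<in> S \<and> lb 0 \<in> S")
      case True
      hence S: "S = {la 0, lb 0}"
        using two_elem enc_ne(12) by blast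
      have gt': "good (lt 0)" using gt S T' by auto
      show ?thesis
      proof (cases "Suc 0 < L")
        case True
        have "(ls 0, la (Suc 0)) \<in> E" "(la (Suc 0), lt 0) \<in> E" using E_intros True by auto
        hence "good (la (Suc 0))" using good_adj[of "la (Suc 0)" "lt 0"] gt' S by auto
        hence "good (ls 0)" using good_adj[of "ls 0" "la (Suc 0)"] \<open>(ls 0, la (Suc 0)) \<in> E\<close> S by auto
        thus ?thesis using 0 gt' S by auto
      next
        case False
        hence "L - 1 = 0" using L by simp
        hence "(ls 0, lt 0) \<in> E" using E_intros(18)[OF L] by simp
        hence "good (ls 0)" using good_adj[of "ls 0" "lt 0"] gt' S by auto
        thus ?thesis using 0 gt' S by auto
      qed
    next
      case nB: False
      have "(la 0 \<notin> S \<and> tb (T-1) \<notin> S) \<or> (lb 0 \<notin> S \<and> tm (T-1) \<notin> S) \<or> (lt 0 \<notin> S \<and> tt (T-1) \<notin> S)"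
        by (rule three_pairs[OF finS cS]) (use T' in auto)
      then obtain g where g: "g \<in> {ls 0, lt 0, la 0, lb 0}" "g \<notin> S" "good g" using ga gb gt by blast
      show ?thesis using cyc[OF L nA nB 0(2,3) g(1,2)] good_step g(3) by blast
    qed
  qed
next
  case (Suc k)
  have L: "Suc k < L" "k < L" using Suc.prems by auto
  have pg: "good y" if "y \<in> {ls k, lt k, la k, lb k}" "y \<notin> S" for y using Suc.IH[OF L(2) that] .
  have d: "(la (Suc k), lt k) \<in> E" "(ls k, lb (Suc k)) \<in> E" "(lb k, lt (Suc k)) \<in> E" "(ls k, la (Suc k)) \<in> E"
    using E_intros L by auto
  have ga: "good (la (Suc k))" if "la (Suc k) \<notin> S" "lt k \<notin> S" using good_adj[of "la (Suc k)" "lt k"] d pg that by blast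
  have ga2: "good (la (Suc k))" if "la (Suc k) \<notin> S" "ls k \<notin> S" using good_adj[of "la (Suc k)" "ls k"] d pg that by blast
  have gb: "good (lb (Suc k))" if "lb (Suc k) \<notin> S" "ls k \<notin> S" using good_adj[of "lb (Suc k)" "ls k"] d pg that by blast
  have gt: "good (lt (Suc k))" if "lt (Suc k) \<notin> S" "lb k \<notin> S" using good_adj[of "lt (Suc k)" "lb k"] d pg that by blast
  show ?case
  proof (cases "ls (Suc k) \<in> S \<and> lt (Suc k) \<in> S")
    case True
    hence S: "S = {ls (Suc k), lt (Suc k)}"
      using two_elem enc_ne(7) by blast
    show ?thesis using Suc.prems S ga gb by auto
  next
    case nA: False
    show ?thesis
    proof (cases "la (Suc k) \<in> S \<and> lb (Suc k) \<in> S")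
      case True
      hence S: "S = {la (Suc k), lb (Suc k)}"
        using two_elem enc_ne(12) by blast
      have gt': "good (lt (Suc k))" using gt S by auto
      show ?thesis
      proof (cases "Suc (Suc k) < L")
        case True
        have "(ls (Suc k), la (Suc (Suc k))) \<in> E" "(la (Suc (Suc k)), lt (Suc k)) \<in> E" using E_intros True by auto
        hence "good (la (Suc (Suc k)))" using good_adj[of "la (Suc (Suc k))" "lt (Suc k)"] gt' S by auto
        hence "good (ls (Suc k))" using good_adj[of "ls (Suc k)" "la (Suc (Suc k))"] \<open>(ls (Suc k), la (Suc (Suc k))) \<in> E\<close> S by auto
        thus ?thesis using Suc.prems gt' S by auto
      next
        case False
        hence "L - 1 = Suc k" using L by simp
        hence "(ls (Suc k), lt (Suc k)) \<in> E" using E_intros(18)[of] L by (metis gr_zeroI not_less0)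
        hence "good (ls (Suc k))" using good_adj[of "ls (Suc k)" "lt (Suc k)"] gt' S by auto
        thus ?thesis using Suc.prems gt' S by auto
      qed
    next
      case nB: False
      have "(la (Suc k) \<notin> S \<and> lt k \<notin> S) \<or> (lb (Suc k) \<notin> S \<and> ls k \<notin> S) \<or> (lt (Suc k) \<notin> S \<and> lb k \<notin> S)"
        by (rule three_pairs[OF finS cS]) auto
      then obtain g where g: "g \<in> {ls (Suc k), lt (Suc k), la (Suc k), lb (Suc k)}" "g \<notin> S" "good g" using ga gb gt by blast
      show ?thesis using cyc[OF L(1) nA nB Suc.prems(2,3) g(1,2)] good_step g(3) by blast
    qed
  qed
qed

lemma all_good: "x \<in> V \<Longrightarrow> x \<notin> S \<Longrightarrow> good x"
  by (cases rule: V_cases) (auto intro: tri_good lev_good)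

lemma conn: "und_connected_on E (V - S)"
  unfolding und_connected_on_def
proof (intro ballI)
  fix x z assume xz: "x \<in> V - S" "z \<in> V - S"
  obtain r1 where r1: "r1 \<in> {tb 0, tm 0, tt 0}" "r1 \<notin> S" "(x, r1) \<in> R\<^sup>*" using all_good xz(1) unfolding good_def by blast
  obtain r2 where r2: "r2 \<in> {tb 0, tm 0, tt 0}" "r2 \<notin> S" "(z, r2) \<in> R\<^sup>*" using all_good xz(2) unfolding good_def by blast
  have tri: "(tb 0, tm 0) \<in> E" "(tm 0, tt 0) \<in> E" "(tb 0, tt 0) \<in> E" using E_intros T0 by auto
  have "(r1, r2) \<in> R\<^sup>*"
  proof (cases "r1 = r2")
    case False
    hence "(r1,r2) \<in> E \<or> (r2,r1) \<in> E" using r1(1) r2(1) tri by auto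
    thus ?thesis using adjR r1(2) r2(2) by blast
  qed simp
  hence "(x, z) \<in> R\<^sup>*" using r1(3) Rstar_sym[OF r2(3)] by (meson rtrancl_trans)
  thus "(x, z) \<in> {(u, v). u \<in> V - S \<and> v \<in> V - S \<and> und_adj E u v}\<^sup>*" unfolding R_def W_def .
qed

end


lemma three_conn: "three_connected V E"
  unfolding three_connected_def using cardV T1 conn by auto

lemma level_edges: assumes "k < L"
  shows "(ls k, la k) \<in> E" "(la k, lt k) \<in> E" "(ls k, lb k) \<in> E" "(lb k, lt k) \<in> E"
  using E_intros assms by auto

section \<open>Lower bound\<close>

context
  fixes xp :: "nat \<Rightarrow> real" and y :: "nat \<Rightarrow> int" and c :: "nat \<times> nat \<Rightarrow> real \<Rightarrow> real \<times> real"
  assumes D: "upward_planar_layered_drawing V E xp y c"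
begin

interpretation dr: drawing V E xp y c using D by unfold_locales

lemma yup: "(u,v) \<in> E \<Longrightarrow> y u < y v" using dr.edge_up .

lemma chain_step:
  assumes k: "Suc k < L" and IH: "k = 0 \<or> y (ls (k-1)) < y (ls k)"
  shows "y (ls k) < y (ls (Suc k)) \<and> y (lt (Suc k)) < y (lt k)"
proof -
  have kL: "k < L" using k by simp
  have e: "(ls k, la k) \<in> E" "(la k, lt k) \<in> E" "(ls k, lb k) \<in> E" "(lb k, lt k) \<in> E"
    "(ls k, la (Suc k)) \<in> E" "(la (Suc k), lt k) \<in> E" using E_intros k by auto
  have VV: "ls k \<in> V" "lt k \<in> V" "la k \<in> V" "lb k \<in> V" "la (Suc k) \<in> V" "ls (Suc k) \<in> V" "lt (Suc k) \<in> V"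
    using in_V k by auto
  have T': "T - 1 < T" using T1 by simp
  from dr.theta[OF e(1,2,3,4,5,6)]
  have th: "dr.inside (ls k) (lb k) (la (Suc k)) (lt k) (xp (la k)) (dr.yr (la k)) \<or>
            dr.inside (ls k) (la k) (la (Suc k)) (lt k) (xp (lb k)) (dr.yr (lb k)) \<or>
            dr.inside (ls k) (la k) (lb k) (lt k) (xp (la (Suc k))) (dr.yr (la (Suc k)))" by simp
  have mid: "dr.inside (ls k) (la k) (lb k) (lt k) (xp (la (Suc k))) (dr.yr (la (Suc k)))"
  proof -
    have no1: "\<not> dr.inside (ls k) (lb k) (la (Suc k)) (lt k) (xp (la k)) (dr.yr (la k))"
    proof
      assume ins: "dr.inside (ls k) (lb k) (la (Suc k)) (lt k) (xp (la k)) (dr.yr (la k))"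
      have l: "(ls k, lb k) \<in> E" "(lb k, lt k) \<in> E" "(ls k, la (Suc k)) \<in> E" "(la (Suc k), lt k) \<in> E" using e by auto
      show False
      proof (cases k)
        case 0
        have L0: "0 < L" using kL by simp
        have e2: "(tb (T-1), la 0) \<in> E" "(tb (T-1), tt (T-1)) \<in> E" "(lt 0, tt (T-1)) \<in> E" using E_intros L0 T' by auto
        have ins2: "dr.inside (ls 0) (lb 0) (la (Suc 0)) (lt 0) (xp (tb (T-1))) (dr.yr (tb (T-1)))"
          by (rule dr.trap[OF l[unfolded 0]]) (use ins e2 VV in_V T' 0 in auto)
        have "dr.inside (ls 0) (lb 0) (la (Suc 0)) (lt 0) (xp (tt (T-1))) (dr.yr (tt (T-1)))"
          by (rule dr.trap[OF l[unfolded 0] _ _ _ _ _ _ _ ins2]) (use e2 VV in_V T' 0 in auto)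
        hence "y (tt (T-1)) < y (lt 0)" unfolding dr.inside_def by simp
        thus False using yup[OF e2(3)] by simp
      next
        case (Suc k')
        have e2: "(ls k', la k) \<in> E" using E_intros k Suc by auto
        have "dr.inside (ls k) (lb k) (la (Suc k)) (lt k) (xp (ls k')) (dr.yr (ls k'))"
          by (rule dr.trap[OF l _ _ _ _ _ _ _ ins]) (use e2 VV in_V k Suc in auto)
        hence "y (ls k) < y (ls k')" unfolding dr.inside_def by simp
        thus False using IH Suc by simp
      qed
    qed
    have no2: "\<not> dr.inside (ls k) (la k) (la (Suc k)) (lt k) (xp (lb k)) (dr.yr (lb k))"
    proof
      assume ins: "dr.inside (ls k) (la k) (la (Suc k)) (lt k) (xp (lb k)) (dr.yr (lb k))"
      have l: "(ls k, la k) \<in> E" "(la k, lt k) \<in> E" "(ls k, la (Suc k)) \<in> E" "(la (Suc k), lt k) \<in> E" using e by auto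
      show False
      proof (cases k)
        case 0
        have L0: "0 < L" using kL by simp
        have e2: "(lb 0, tm (T-1)) \<in> E" "(tm (T-1), tt (T-1)) \<in> E" "(lt 0, tt (T-1)) \<in> E" using E_intros L0 T' by auto
        have ins2: "dr.inside (ls 0) (la 0) (la (Suc 0)) (lt 0) (xp (tm (T-1))) (dr.yr (tm (T-1)))"
          by (rule dr.trap[OF l[unfolded 0]]) (use ins e2 VV in_V T' 0 in auto)
        have "dr.inside (ls 0) (la 0) (la (Suc 0)) (lt 0) (xp (tt (T-1))) (dr.yr (tt (T-1)))"
          by (rule dr.trap[OF l[unfolded 0] _ _ _ _ _ _ _ ins2]) (use e2 VV in_V T' 0 in auto)
        hence "y (tt (T-1)) < y (lt 0)" unfolding dr.inside_def by simp
        thus False using yup[OF e2(3)] by simp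
      next
        case (Suc k')
        have e2: "(ls k', lb k) \<in> E" using E_intros k Suc by auto
        have "dr.inside (ls k) (la k) (la (Suc k)) (lt k) (xp (ls k')) (dr.yr (ls k'))"
          by (rule dr.trap[OF l _ _ _ _ _ _ _ ins]) (use e2 VV in_V k Suc in auto)
        hence "y (ls k) < y (ls k')" unfolding dr.inside_def by simp
        thus False using IH Suc by simp
      qed
    qed
    show ?thesis using th no1 no2 by blast
  qed
  have l: "(ls k, la k) \<in> E" "(la k, lt k) \<in> E" "(ls k, lb k) \<in> E" "(lb k, lt k) \<in> E" using e by auto
  have e3: "(ls (Suc k), la (Suc k)) \<in> E" "(la (Suc k), lt (Suc k)) \<in> E" using E_intros k by auto
  have "dr.inside (ls k) (la k) (lb k) (lt k) (xp (ls (Suc k))) (dr.yr (ls (Suc k)))"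
    by (rule dr.trap[OF l _ _ _ _ _ _ _ mid]) (use e3 VV in auto)
  moreover have "dr.inside (ls k) (la k) (lb k) (lt k) (xp (lt (Suc k))) (dr.yr (lt (Suc k)))"
    by (rule dr.trap[OF l _ _ _ _ _ _ _ mid]) (use e3 VV in auto)
  ultimately show ?thesis unfolding dr.inside_def by simp
qed

lemma chain: "Suc k < L \<Longrightarrow> y (ls k) < y (ls (Suc k)) \<and> y (lt (Suc k)) < y (lt k)"
proof (induction k)
  case 0 thus ?case using chain_step[of 0] by simp
next
  case (Suc k)
  hence "y (ls k) < y (ls (Suc k))" by simp
  thus ?case using chain_step[OF Suc.prems] by simp
qed

lemma range_bound: "k < L \<Longrightarrow> y (lt k) - y (ls k) + 2 * int k \<le> y (lt 0) - y (ls 0)"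
proof (induction k)
  case 0 thus ?case by simp
next
  case (Suc k) thus ?case using chain[of k] by simp
qed

lemma level_range: "k < L \<Longrightarrow> y (lt k) - y (ls k) \<ge> 2"
  using yup[OF level_edges(1)] yup[OF level_edges(2)] by fastforce

lemma span_edge: "(u,v) \<in> E \<Longrightarrow> y v - y u \<le> drawing_span E y"
proof -
  assume e: "(u,v) \<in> E"
  have fin: "finite E" using finite_subset[OF E_sub] finV by auto
  have "y v - y u \<in> insert 0 ((\<lambda>(u, v). y v - y u) ` E)" using e by force
  thus ?thesis unfolding drawing_span_def by (intro Max_ge) (use fin in auto)
qed

lemma span_lower: "drawing_span E y \<ge> (if L = 0 then 2 else int L + 1)"
proof (cases "L = 0")
  case True
  have e: "(tb 0, tm 0) \<in> E" "(tm 0, tt 0) \<in> E" "(tb 0, tt 0) \<in> E" using E_intros T1 by auto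
  have "y (tt 0) - y (tb 0) \<ge> 2" using yup[OF e(1)] yup[OF e(2)] by simp
  thus ?thesis using span_edge[OF e(3)] True by simp
next
  case False
  hence L: "0 < L" by simp
  have T': "T - 1 < T" using T1 by simp
  have r: "y (lt 0) - y (ls 0) \<ge> 2 * int L"
    using range_bound[of "L-1"] level_range[of "L-1"] L by (simp add: of_nat_diff)
  have e: "(ls 0, la 0) \<in> E" "(tb (T-1), tt (T-1)) \<in> E" "(tb (T-1), la 0) \<in> E" "(lt 0, tt (T-1)) \<in> E"
    using E_intros L T' by auto
  have "(y (la 0) - y (ls 0)) + (y (tt (T-1)) - y (tb (T-1))) \<ge> 2 * int L + 2"
    using r yup[OF e(3)] yup[OF e(4)] by simp
  hence "y (la 0) - y (ls 0) \<ge> int L + 1 \<or> y (tt (T-1)) - y (tb (T-1)) \<ge> int L + 1" by linarith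
  thus ?thesis using span_edge[OF e(1)] span_edge[OF e(2)] False by auto
qed

end

end



context fam begin

definition NN :: nat where "NN = T + L"
definition Wd :: int where "Wd = 8 * int NN + 8"
definition hhi :: int where "hhi = 2 * Wd + 20"
definition Ht :: int where "Ht = (2 * int NN + 1) * hhi"
definition hr :: real where "hr = real_of_int hhi"
definition rxL :: "nat \<Rightarrow> real" where "rxL j = 4 * real j"
definition rxR :: "nat \<Rightarrow> real" where "rxR j = real_of_int Wd - 4 * real j"
definition ryB :: "nat \<Rightarrow> real" where "ryB j = real j * hr"
definition ryT :: "nat \<Rightarrow> real" where "ryT j = real_of_int Ht - real j * hr"

lemma hr_pos: "hr > 0" unfolding hr_def hhi_def Wd_def by simp
lemma Ht_eq: "real_of_int Ht = (2 * real NN + 1) * hr" unfolding Ht_def hr_def by simp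
lemma Wd_eq: "real_of_int Wd = 8 * real NN + 8" unfolding Wd_def by simp
lemma hr_eq: "hr = 2 * real_of_int Wd + 20" unfolding hr_def hhi_def by simp

lemma box_j: assumes j: "j < NN" shows "box (rxL j) (rxR j) (ryB j) (ryT j) hr"
proof -
  have jj: "real j + 1 \<le> real NN" using j by simp
  have "(2 * real j + 3) * hr \<le> (2 * real NN + 1) * hr"
    by (rule mult_right_mono) (use jj hr_pos in auto)
  thus ?thesis unfolding box_def rxL_def rxR_def ryB_def ryT_def Ht_eq Wd_eq hr_eq
    using jj by (auto simp: algebra_simps)
qed

definition GLX :: "nat \<Rightarrow> lp \<Rightarrow> real" where "GLX j p = box.lx (rxL j) (rxR j) p"
definition GLY :: "nat \<Rightarrow> lp \<Rightarrow> real" where "GLY j p = box.ly (ryB j) (ryT j) hr p"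
definition GRX :: "nat \<Rightarrow> rk \<Rightarrow> real \<Rightarrow> real" where "GRX j k h = box.rX (rxL j) (rxR j) (ryB j) (ryT j) hr k h"
definition Ginr :: "nat \<Rightarrow> rk \<Rightarrow> real \<Rightarrow> bool" where "Ginr j k h = box.inr (ryB j) (ryT j) hr k h"

definition lyi :: "nat \<Rightarrow> lp \<Rightarrow> int" where
  "lyi j p = (case p of pS \<Rightarrow> int j * hhi | pL \<Rightarrow> int j * hhi + 4 | pR \<Rightarrow> Ht - int j * hhi - hhi - 4
     | pC \<Rightarrow> Ht - int j * hhi | qL \<Rightarrow> int j * hhi + hhi + 4 | qR \<Rightarrow> Ht - int j * hhi - 2*hhi - 4
     | qC \<Rightarrow> Ht - int j * hhi - hhi)"

lemma GLX_0: assumes "j < NN" shows "GLX j pS = rxL j + 4" "GLX j pL = rxL j" "GLX j pR = rxR j"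
  "GLX j pC = rxR j" "GLX j qL = rxL j + 4" "GLX j qR = rxR j - 4" "GLX j qC = rxR j - 4"
  unfolding GLX_def using box.lx.simps[OF box_j[OF assms]] by simp_all
lemma GLY_0: assumes "j < NN" shows "GLY j pS = ryB j" "GLY j pL = ryB j + 4" "GLY j pR = ryT j - hr - 4"
  "GLY j pC = ryT j" "GLY j qL = ryB j + hr + 4" "GLY j qR = ryT j - 2*hr - 4" "GLY j qC = ryT j - hr"
  unfolding GLY_def using box.ly.simps[OF box_j[OF assms]] by simp_all

lemma GLX_simps: assumes "j < NN" shows "GLX j pS = 4 * real j + 4" "GLX j pL = 4 * real j" "GLX j pR = real_of_int Wd - 4 * real j"
  "GLX j pC = real_of_int Wd - 4 * real j" "GLX j qL = 4 * real j + 4" "GLX j qR = real_of_int Wd - 4 * real j - 4"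
  "GLX j qC = real_of_int Wd - 4 * real j - 4"
  using GLX_0[OF assms] unfolding rxL_def rxR_def by simp_all

lemma GLY_simps: assumes "j < NN" shows "GLY j pS = real j * hr" "GLY j pL = real j * hr + 4" "GLY j pR = real_of_int Ht - real j * hr - hr - 4"
  "GLY j pC = real_of_int Ht - real j * hr" "GLY j qL = real j * hr + hr + 4" "GLY j qR = real_of_int Ht - real j * hr - 2*hr - 4"
  "GLY j qC = real_of_int Ht - real j * hr - hr"
  using GLY_0[OF assms] unfolding ryB_def ryT_def by simp_all

lemma lyi_GLY: assumes "j < NN" shows "real_of_int (lyi j p) = GLY j p"
  unfolding lyi_def by (cases p) (simp_all add: GLY_simps[OF assms] hr_def)

lemma inner_pts: assumes "Suc j < NN" shows "GLX j qL = GLX (Suc j) pL" "GLY j qL = GLY (Suc j) pL"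
  "GLX j qR = GLX (Suc j) pR" "GLY j qR = GLY (Suc j) pR" "GLX j qC = GLX (Suc j) pC" "GLY j qC = GLY (Suc j) pC"
  using assms by (simp_all add: GLX_simps GLY_simps algebra_simps)

definition vfr :: "nat \<Rightarrow> nat" where "vfr v = (if v < 3*T then v div 3 else T + (v - 3*T) div 4)"
definition vpt :: "nat \<Rightarrow> lp" where
  "vpt v = (if v < 3*T then (if v mod 3 = 0 then pL else if v mod 3 = 1 then pR else pC)
            else (if (v - 3*T) mod 4 = 0 then pS else if (v - 3*T) mod 4 = 1 then pC
                  else if (v - 3*T) mod 4 = 2 then pL else pR))"

lemma dec_simps:
  "i < T \<Longrightarrow> vfr (tb i) = i" "i < T \<Longrightarrow> vpt (tb i) = pL"
  "i < T \<Longrightarrow> vfr (tm i) = i" "i < T \<Longrightarrow> vpt (tm i) = pR"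
  "i < T \<Longrightarrow> vfr (tt i) = i" "i < T \<Longrightarrow> vpt (tt i) = pC"
  "vfr (ls k) = T + k" "vpt (ls k) = pS" "vfr (lt k) = T + k" "vpt (lt k) = pC"
  "vfr (la k) = T + k" "vpt (la k) = pL" "vfr (lb k) = T + k" "vpt (lb k) = pR"
proof -
  have a: "(3*i+2) mod 3 = 2" "(3*i+1) mod 3 = 1" "(3*i) mod 3 = 0" "(3*i+1) div 3 = i" "(3*i+2) div 3 = i" "(3*i) div 3 = i" for i :: nat by presburger+
  have b: "(4*k+1) mod 4 = 1" "(4*k+2) mod 4 = 2" "(4*k+3) mod 4 = 3" "(4*k) mod 4 = 0"
    "(4*k+1) div 4 = k" "(4*k+2) div 4 = k" "(4*k+3) div 4 = k" "(4*k) div 4 = k" for k :: nat by presburger+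
  have c: "\<not> ls k < 3*T" "\<not> lt k < 3*T" "\<not> la k < 3*T" "\<not> lb k < 3*T"
    "ls k - 3*T = 4*k" "lt k - 3*T = 4*k+1" "la k - 3*T = 4*k+2" "lb k - 3*T = 4*k+3"
    unfolding ls_def lt_def la_def lb_def by auto
  show "vfr (ls k) = T + k" "vpt (ls k) = pS" "vfr (lt k) = T + k" "vpt (lt k) = pC"
    "vfr (la k) = T + k" "vpt (la k) = pL" "vfr (lb k) = T + k" "vpt (lb k) = pR"
    unfolding vfr_def vpt_def by (simp_all only: c b if_False) simp_all
  show "i < T \<Longrightarrow> vfr (tb i) = i" "i < T \<Longrightarrow> vpt (tb i) = pL"
    "i < T \<Longrightarrow> vfr (tm i) = i" "i < T \<Longrightarrow> vpt (tm i) = pR"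
    "i < T \<Longrightarrow> vfr (tt i) = i" "i < T \<Longrightarrow> vpt (tt i) = pC"
    unfolding vfr_def vpt_def tb_def tm_def tt_def by (simp_all only: a) auto
qed

definition xpos :: "nat \<Rightarrow> real" where "xpos v = GLX (vfr v) (vpt v)"
definition yposi :: "nat \<Rightarrow> int" where "yposi v = lyi (vfr v) (vpt v)"

definition gv :: "nat \<Rightarrow> lp \<Rightarrow> nat" where
  "gv j p = (if j < T then (case p of pL \<Rightarrow> tb j | pR \<Rightarrow> tm j | _ \<Rightarrow> tt j)
             else (case p of pS \<Rightarrow> ls (j - T) | pL \<Rightarrow> la (j - T) | pR \<Rightarrow> lb (j - T) | _ \<Rightarrow> lt (j - T)))"

lemma NN_T: "T \<le> NN" "L \<le> NN" unfolding NN_def by auto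

lemma gv_props: assumes "j < NN" "p \<in> {pL, pR, pC}"
  shows "gv j p \<in> V \<and> vfr (gv j p) = j \<and> vpt (gv j p) = p"
proof (cases "j < T")
  case True thus ?thesis using assms by (auto simp: gv_def dec_simps in_V)
next
  case False
  hence k: "j - T < L" "T + (j - T) = j" using assms(1) unfolding NN_def by auto
  thus ?thesis using assms False by (auto simp: gv_def dec_simps in_V)
qed

lemma vertex_frame: assumes "v \<in> V"
  shows "vfr v < NN \<and> vpt v \<in> {pS, pL, pR, pC} \<and> (vpt v = pS \<longrightarrow> T \<le> vfr v) \<and> gv (vfr v) (vpt v) = v"
  using assms
proof (cases rule: V_cases)
qed (auto simp: dec_simps gv_def NN_def)


definition ftype_of :: "nat \<Rightarrow> ftype" where
  "ftype_of j = (if Suc j < T then TriN else if Suc j = T then (if 0 < L then TriJ else Tri0)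
                 else if Suc j < NN then LevN else LevL)"

lemma ftype_inner: "Suc j < NN \<Longrightarrow> has_inner (ftype_of j)"
  unfolding ftype_of_def has_inner_def NN_def by auto

lemma ftype_pts: "j < NN \<Longrightarrow> p \<in> {pS, pL, pR, pC} \<Longrightarrow> (p = pS \<longrightarrow> T \<le> j) \<Longrightarrow> p \<in> fpts (ftype_of j)"
  unfolding ftype_of_def by (auto simp: NN_def)

lemma ftype_qpts: "Suc j < NN \<Longrightarrow> p \<in> {qL, qR, qC} \<Longrightarrow> p \<in> fpts (ftype_of j)"
  unfolding ftype_of_def by (auto simp: NN_def)

lemma pos_v: "v \<in> V \<Longrightarrow> xpos v = GLX (vfr v) (vpt v) \<and> real_of_int (yposi v) = GLY (vfr v) (vpt v)"
  unfolding xpos_def yposi_def using lyi_GLY vertex_frame by auto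

lemma pos_gv: "j < NN \<Longrightarrow> p \<in> {pL, pR, pC} \<Longrightarrow> xpos (gv j p) = GLX j p \<and> real_of_int (yposi (gv j p)) = GLY j p"
  using gv_props pos_v by metis

lemma pos_tri: "i < T \<Longrightarrow> xpos (tb i) = GLX i pL \<and> real_of_int (yposi (tb i)) = GLY i pL"
  "i < T \<Longrightarrow> xpos (tm i) = GLX i pR \<and> real_of_int (yposi (tm i)) = GLY i pR"
  "i < T \<Longrightarrow> xpos (tt i) = GLX i pC \<and> real_of_int (yposi (tt i)) = GLY i pC"
  using pos_v[of "tb i"] pos_v[of "tm i"] pos_v[of "tt i"] in_V dec_simps by auto

lemma pos_lev: "k < L \<Longrightarrow> xpos (ls k) = GLX (T+k) pS \<and> real_of_int (yposi (ls k)) = GLY (T+k) pS"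
  "k < L \<Longrightarrow> xpos (lt k) = GLX (T+k) pC \<and> real_of_int (yposi (lt k)) = GLY (T+k) pC"
  "k < L \<Longrightarrow> xpos (la k) = GLX (T+k) pL \<and> real_of_int (yposi (la k)) = GLY (T+k) pL"
  "k < L \<Longrightarrow> xpos (lb k) = GLX (T+k) pR \<and> real_of_int (yposi (lb k)) = GLY (T+k) pR"
  using pos_v[of "ls k"] pos_v[of "lt k"] pos_v[of "la k"] pos_v[of "lb k"] in_V dec_simps by auto

definition endpos :: "nat \<times> nat \<Rightarrow> nat \<Rightarrow> rk \<Rightarrow> bool" where
  "endpos e j k \<longleftrightarrow> xpos (fst e) = GLX j (src k) \<and> real_of_int (yposi (fst e)) = GLY j (src k) \<and>
                    xpos (snd e) = GLX j (dst k) \<and> real_of_int (yposi (snd e)) = GLY j (dst k)"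

lemma EK_props: assumes "EK e j k" shows "j < NN \<and> k \<in> fset (ftype_of j) \<and> endpos e j k"
proof -
  have T': "T - 1 < T" "Suc (T - 1) = T" using T1 by auto
  consider "EK1 e j k" | "EK2 e j k" | "EK3 e j k" | "EK4 e j k" | "EK5 e j k" | "EK6 e j k"
    using assms unfolding EK_def by blast
  thus ?thesis
  proof cases
    case 1
    then obtain i where i: "i < T" "j = i" "(e = (tb i, tm i) \<and> k = LR) \<or> (e = (tm i, tt i) \<and> k = RC) \<or> (e = (tb i, tt i) \<and> k = LC)"
      unfolding EK1_def by blast
    have "i < NN" using i NN_T by simp
    thus ?thesis using i pos_tri unfolding endpos_def ftype_of_def by auto
  next
    case 2
    then obtain i where i: "Suc i < T" "j = i" "(e = (tb i, tm (Suc i)) \<and> k = LqR) \<or> (e = (tm i, tt (Suc i)) \<and> k = RqC) \<or> (e = (tb (Suc i), tt i) \<and> k = qLC)"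
      unfolding EK2_def by blast
    have N: "Suc i < NN" using i NN_T by simp
    thus ?thesis using i pos_tri[of i] pos_tri[of "Suc i"] inner_pts[OF N] unfolding endpos_def ftype_of_def by auto
  next
    case 3
    hence j: "0 < L" "j = T - 1" "(e = (tb (T-1), la 0) \<and> k = LqL) \<or> (e = (lt 0, tt (T-1)) \<and> k = qCC) \<or> (e = (lb 0, tm (T-1)) \<and> k = qRR)"
      unfolding EK3_def by auto
    have N: "Suc (T-1) < NN" using j T1 unfolding NN_def by simp
    have p0: "xpos (la 0) = GLX (Suc (T-1)) pL \<and> real_of_int (yposi (la 0)) = GLY (Suc (T-1)) pL"
      "xpos (lt 0) = GLX (Suc (T-1)) pC \<and> real_of_int (yposi (lt 0)) = GLY (Suc (T-1)) pC"
      "xpos (lb 0) = GLX (Suc (T-1)) pR \<and> real_of_int (yposi (lb 0)) = GLY (Suc (T-1)) pR"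
      using pos_lev[of 0] j T' by auto
    show ?thesis using j pos_tri[OF T'(1)] p0 inner_pts[OF N] N T' unfolding endpos_def ftype_of_def by auto
  next
    case 4
    then obtain k' where i: "k' < L" "j = T + k'" "(e = (ls k', la k') \<and> k = SL) \<or> (e = (la k', lt k') \<and> k = LC)
        \<or> (e = (ls k', lb k') \<and> k = SR) \<or> (e = (lb k', lt k') \<and> k = RC)"
      unfolding EK4_def by blast
    have "T + k' < NN" using i unfolding NN_def by simp
    thus ?thesis using i pos_lev unfolding endpos_def ftype_of_def by auto
  next
    case 5
    then obtain k' where i: "Suc k' < L" "j = T + k'" "(e = (ls k', la (Suc k')) \<and> k = SqL) \<or> (e = (la (Suc k'), lt k') \<and> k = qLC)
        \<or> (e = (ls k', lb (Suc k')) \<and> k = SqR) \<or> (e = (lb k', lt (Suc k')) \<and> k = RqC)"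
      unfolding EK5_def by blast
    have N: "Suc (T + k') < NN" using i unfolding NN_def by simp
    have p1: "xpos (la (Suc k')) = GLX (Suc (T+k')) pL \<and> real_of_int (yposi (la (Suc k'))) = GLY (Suc (T+k')) pL"
      "xpos (lt (Suc k')) = GLX (Suc (T+k')) pC \<and> real_of_int (yposi (lt (Suc k'))) = GLY (Suc (T+k')) pC"
      "xpos (lb (Suc k')) = GLX (Suc (T+k')) pR \<and> real_of_int (yposi (lb (Suc k'))) = GLY (Suc (T+k')) pR"
      using pos_lev[of "Suc k'"] i by auto
    show ?thesis using i pos_lev[of k'] p1 inner_pts[OF N] N unfolding endpos_def ftype_of_def by auto
  next
    case 6
    hence j: "0 < L" "j = T + L - 1" "e = (ls (L-1), lt (L-1))" "k = SC" unfolding EK6_def by auto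
    have N: "j < NN" "\<not> Suc j < NN" "\<not> Suc j < T" "Suc j \<noteq> T" "T + (L - 1) = j" using j unfolding NN_def by auto
    show ?thesis using j pos_lev[of "L-1"] N unfolding endpos_def ftype_of_def by auto
  qed
qed

lemma pos_in_box: assumes "j < NN" "p \<in> {pS, pL, pR, pC}"
  shows "rxL j \<le> GLX j p \<and> GLX j p \<le> rxR j \<and> ryB j \<le> GLY j p \<and> GLY j p \<le> ryT j"
proof -
  interpret B: box "rxL j" "rxR j" "ryB j" "ryT j" hr by (rule box_j[OF assms(1)])
  show ?thesis using assms(2) B.w B.hb B.hgt GLX_0[OF assms(1)] GLY_0[OF assms(1)] by auto
qed

lemma hr_mono: "j1 \<le> j2 \<Longrightarrow> real j1 * hr + real (j2 - j1) * hr = real j2 * hr"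
  by (simp add: of_nat_diff algebra_simps)

lemma box_sub: assumes "j + d \<le> j'" "j' < NN"
  shows "rxL j + 4 * real d \<le> rxL j' \<and> rxR j' \<le> rxR j - 4 * real d \<and> ryB j + real d * hr \<le> ryB j' \<and> ryT j' \<le> ryT j - real d * hr"
proof -
  have "real d * hr \<le> real (j' - j) * hr" using assms hr_pos by (intro mult_right_mono) auto
  moreover have "real j * hr + real (j' - j) * hr = real j' * hr" using hr_mono[of j j'] assms by simp
  ultimately show ?thesis using assms unfolding rxL_def rxR_def ryB_def ryT_def by auto
qed

lemma pos_frame_inj: assumes "j1 < NN" "j2 < NN" "p1 \<in> {pS, pL, pR, pC}" "p2 \<in> {pS, pL, pR, pC}"
    "GLX j1 p1 = GLX j2 p2" "GLY j1 p1 = GLY j2 p2"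
  shows "j1 = j2 \<and> p1 = p2"
proof -
  have W: "real_of_int Wd = 8 * real NN + 8" by (rule Wd_eq)
  have n: "real j1 + 1 \<le> real NN" "real j2 + 1 \<le> real NN" using assms(1,2) by auto
  note X1 = GLX_simps[OF assms(1)] and X2 = GLX_simps[OF assms(2)]
  note Y1 = GLY_simps[OF assms(1)] and Y2 = GLY_simps[OF assms(2)]
  have hp: "hr > 0" by (rule hr_pos)
  consider "p1 = pS" | "p1 = pL" | "p1 = pR" | "p1 = pC" using assms(3) by blast
  thus ?thesis
  proof cases
    case 1
    consider "p2 = pS" | "p2 = pL" | "p2 = pR" | "p2 = pC" using assms(4) by blast
    thus ?thesis
    proof cases
      case 1 thus ?thesis using \<open>p1 = pS\<close> assms(5) X1 X2 by simp
    next
      case 2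
      hence "real j2 = real j1 + 1" using \<open>p1 = pS\<close> assms(5) X1 X2 by simp
      hence "real j2 * hr = real j1 * hr + hr" by (simp add: algebra_simps)
      thus ?thesis using \<open>p1 = pS\<close> 2 assms(6) Y1 Y2 hp by simp
    next
      case 3 thus ?thesis using \<open>p1 = pS\<close> assms(5) X1 X2 W n by simp
    next
      case 4 thus ?thesis using \<open>p1 = pS\<close> assms(5) X1 X2 W n by simp
    qed
  next
    case 2
    consider "p2 = pS" | "p2 = pL" | "p2 = pR" | "p2 = pC" using assms(4) by blast
    thus ?thesis
    proof cases
      case 1
      hence "real j1 = real j2 + 1" using \<open>p1 = pL\<close> assms(5) X1 X2 by simp
      hence "real j1 * hr = real j2 * hr + hr" by (simp add: algebra_simps)
      thus ?thesis using \<open>p1 = pL\<close> 1 assms(6) Y1 Y2 hp by simp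
    next
      case 2 thus ?thesis using \<open>p1 = pL\<close> assms(5) X1 X2 by simp
    next
      case 3 thus ?thesis using \<open>p1 = pL\<close> assms(5) X1 X2 W n by simp
    next
      case 4 thus ?thesis using \<open>p1 = pL\<close> assms(5) X1 X2 W n by simp
    qed
  next
    case 3
    consider "p2 = pS" | "p2 = pL" | "p2 = pR" | "p2 = pC" using assms(4) by blast
    thus ?thesis
    proof cases
      case 1 thus ?thesis using \<open>p1 = pR\<close> assms(5) X1 X2 W n by simp
    next
      case 2 thus ?thesis using \<open>p1 = pR\<close> assms(5) X1 X2 W n by simp
    next
      case 3 thus ?thesis using \<open>p1 = pR\<close> assms(5) X1 X2 by simp
    next
      case 4
      hence "j1 = j2" using \<open>p1 = pR\<close> assms(5) X1 X2 by simp
      thus ?thesis using \<open>p1 = pR\<close> 4 assms(6) Y1 Y2 hp by simp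
    qed
  next
    case 4
    consider "p2 = pS" | "p2 = pL" | "p2 = pR" | "p2 = pC" using assms(4) by blast
    thus ?thesis
    proof cases
      case 1 thus ?thesis using \<open>p1 = pC\<close> assms(5) X1 X2 W n by simp
    next
      case 2 thus ?thesis using \<open>p1 = pC\<close> assms(5) X1 X2 W n by simp
    next
      case 3
      hence "j1 = j2" using \<open>p1 = pC\<close> assms(5) X1 X2 by simp
      thus ?thesis using \<open>p1 = pC\<close> 3 assms(6) Y1 Y2 hp by simp
    next
      case 4 thus ?thesis using \<open>p1 = pC\<close> assms(5) X1 X2 by simp
    qed
  qed
qed

lemma pos_inj: assumes "u \<in> V" "v \<in> V" "xpos u = xpos v" "real_of_int (yposi u) = real_of_int (yposi v)"
  shows "u = v"
proof -
  have "vfr u = vfr v \<and> vpt u = vpt v"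
    by (rule pos_frame_inj) (use vertex_frame[OF assms(1)] vertex_frame[OF assms(2)] pos_v[OF assms(1)] pos_v[OF assms(2)] assms(3,4) in auto)
  thus ?thesis using vertex_frame[OF assms(1)] vertex_frame[OF assms(2)] by metis
qed


definition ek :: "nat \<times> nat \<Rightarrow> nat \<times> rk" where "ek e = (SOME jk. EK e (fst jk) (snd jk))"

lemma ek: "e \<in> E \<Longrightarrow> EK e (fst (ek e)) (snd (ek e))"
  unfolding ek_def E_def by (rule someI_ex) auto

definition yr :: "nat \<Rightarrow> real" where "yr v = real_of_int (yposi v)"

lemma hr_lt: "j1 < j2 \<Longrightarrow> real j1 * hr < real j2 * hr"
  using hr_pos by simp

lemma G1:
  assumes e: "e \<in> E" and w: "w \<in> V" and jk: "ek e = (j, k)"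
    and h: "Ginr j k h" "GRX j k h = xpos w" "h = yr w"
  shows "w = fst e \<or> w = snd e"
proof -
  have EKe: "EK e j k" using ek[OF e] jk by simp
  have jN: "j < NN" and kF: "k \<in> fset (ftype_of j)" and ep: "endpos e j k" using EK_props[OF EKe] by auto
  interpret B: box "rxL j" "rxR j" "ryB j" "ryT j" hr by (rule box_j[OF jN])
  have inr: "B.inr k h" using h(1) unfolding Ginr_def .
  have LA: "rxL j \<le> GRX j k h" "GRX j k h \<le> rxR j" "ryB j \<le> h" "h \<le> ryT j"
    using B.LA_all[OF inr] unfolding GRX_def by auto
  have ev: "fst e \<in> V" "snd e \<in> V" using e E_sub by auto
  define jw where "jw = vfr w"
  define pw where "pw = vpt w"
  have wf: "jw < NN" "pw \<in> {pS, pL, pR, pC}" "pw = pS \<longrightarrow> T \<le> jw" "gv jw pw = w"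
    using vertex_frame[OF w] unfolding jw_def pw_def by auto
  have wp: "xpos w = GLX jw pw" "yr w = GLY jw pw" using pos_v[OF w] unfolding jw_def pw_def yr_def by auto
  have endw: "w = fst e" if "GLX jw pw = GLX j (src k)" "GLY jw pw = GLY j (src k)"
    using pos_inj[OF w ev(1)] ep wp that unfolding endpos_def yr_def by auto
  have endw2: "w = snd e" if "GLX jw pw = GLX j (dst k)" "GLY jw pw = GLY j (dst k)"
    using pos_inj[OF w ev(2)] ep wp that unfolding endpos_def yr_def by auto
  have X: "GRX j k h = GLX jw pw" "h = GLY jw pw" using h wp by auto
  note Xs = GLX_simps[OF wf(1)] and Ys = GLY_simps[OF wf(1)]
  have W: "real_of_int Wd = 8 * real NN + 8" by (rule Wd_eq)
  consider (lt) "jw < j" | (eq) "jw = j" | (s1) "jw = Suc j" | (s2) "Suc (Suc j) \<le> jw" by linarith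
  thus ?thesis
  proof cases
    case lt
    have "real jw * hr < real j * hr" using hr_lt[OF lt] .
    moreover have "4 * real jw < 4 * real j" using lt by simp
    ultimately show ?thesis using wf(2) X LA Xs Ys unfolding rxL_def rxR_def ryB_def by auto
  next
    case eq
    have pF: "pw \<in> fpts (ftype_of j)" using ftype_pts[OF wf(1) wf(2) wf(3)] eq by simp
    show ?thesis
    proof (cases "pw = src k \<or> pw = dst k")
      case True thus ?thesis using endw endw2 eq by auto
    next
      case False
      have "B.okv k pw" by (rule B.okv_frame[OF kF pF]) (use False in auto)
      moreover have "B.inr k (B.ly pw) \<and> B.rX k (B.ly pw) = B.lx pw"
        using inr X eq unfolding GRX_def GLX_def GLY_def by auto
      ultimately show ?thesis unfolding B.okv_def by blast
    qed
  next
    case s1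
    have N: "Suc j < NN" using wf(1) s1 by simp
    show ?thesis
    proof (cases "pw = pS")
      case True
      have x: "GRX j k h = rxL j + 8" "h = ryB j + hr"
        using X s1 True GLX_simps[OF N] GLY_simps[OF N] unfolding rxL_def ryB_def by (auto simp: algebra_simps)
      have "B.rX k h = rxL j + 4 \<or> (B.rX k h = B.lx qR \<and> h = B.ly qR) \<or> (B.rX k h = B.lx qC \<and> h = B.ly qC)"
        by (rule B.LB_frame[OF kF ftype_inner[OF N] inr]) (use x B.w B.hgt hr_pos in \<open>auto simp: GRX_def\<close>)
      thus ?thesis using x B.w unfolding GRX_def by auto
    next
      case False
      then obtain q where q: "q \<in> {qL, qR, qC}" "GLX j q = GLX jw pw" "GLY j q = GLY jw pw"
        using wf(2) inner_pts[OF N] s1 by auto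
      have qF: "q \<in> fpts (ftype_of j)" by (rule ftype_qpts[OF N q(1)])
      show ?thesis
      proof (cases "q = src k \<or> q = dst k")
        case True thus ?thesis using endw endw2 q by auto
      next
        case False
        have "B.okv k q" by (rule B.okv_frame[OF kF qF]) (use False in auto)
        moreover have "B.inr k (B.ly q) \<and> B.rX k (B.ly q) = B.lx q"
          using inr X q unfolding GRX_def GLX_def GLY_def by auto
        ultimately show ?thesis unfolding B.okv_def by blast
      qed
    qed
  next
    case s2
    have N: "Suc j < NN" using wf(1) s2 by simp
    have bs: "rxL j + 4 * real 2 \<le> rxL jw \<and> rxR jw \<le> rxR j - 4 * real 2 \<and> ryB j + real 2 * hr \<le> ryB jw \<and> ryT jw \<le> ryT j - real 2 * hr"
      by (rule box_sub) (use s2 wf(1) in auto)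
    have pb: "rxL jw \<le> GLX jw pw \<and> GLX jw pw \<le> rxR jw \<and> ryB jw \<le> GLY jw pw \<and> GLY jw pw \<le> ryT jw"
      by (rule pos_in_box[OF wf(1,2)])
    have "B.rX k h = rxL j + 4 \<or> (B.rX k h = B.lx qR \<and> h = B.ly qR) \<or> (B.rX k h = B.lx qC \<and> h = B.ly qC)"
      by (rule B.LB_frame[OF kF ftype_inner[OF N] inr]) (use X bs pb hr_pos in \<open>auto simp: GRX_def\<close>)
    thus ?thesis using X bs pb B.lx.simps unfolding GRX_def by auto
  qed
qed


lemma G2a:
  assumes e: "e \<in> E" and f: "f \<in> E" and ne: "e \<noteq> f" and jk: "ek e = (j, k)" and jk': "ek f = (j', k')"
    and jj: "j \<le> j'" and h: "Ginr j k h" "Ginr j' k' h" "GRX j k h = GRX j' k' h"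
  shows "\<exists>w. w \<in> V \<and> xpos w = GRX j k h \<and> yr w = h"
proof -
  have EKe: "EK e j k" using ek[OF e] jk by simp
  have EKf: "EK f j' k'" using ek[OF f] jk' by simp
  have jN: "j < NN" and kF: "k \<in> fset (ftype_of j)" and ep: "endpos e j k" using EK_props[OF EKe] by auto
  have jN': "j' < NN" and kF': "k' \<in> fset (ftype_of j')" and ep': "endpos f j' k'" using EK_props[OF EKf] by auto
  interpret B: box "rxL j" "rxR j" "ryB j" "ryT j" hr by (rule box_j[OF jN])
  interpret B': box "rxL j'" "rxR j'" "ryB j'" "ryT j'" hr by (rule box_j[OF jN'])
  have inr: "B.inr k h" using h(1) unfolding Ginr_def .
  have inr': "B'.inr k' h" using h(2) unfolding Ginr_def .
  have ev: "fst e \<in> V" "snd e \<in> V" "fst f \<in> V" "snd f \<in> V" using e f E_sub by auto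
  have LA': "rxL j' \<le> GRX j' k' h" "GRX j' k' h \<le> rxR j'" "ryB j' \<le> h" "h \<le> ryT j'"
    using B'.LA_all[OF inr'] unfolding GRX_def by auto
  consider (eq) "j' = j" | (s1) "j' = Suc j" | (s2) "Suc (Suc j) \<le> j'" using jj by linarith
  thus ?thesis
  proof cases
    case eq
    show ?thesis
    proof (cases "k = k'")
      case True
      have "fst e = fst f" "snd e = snd f"
        using pos_inj[OF ev(1) ev(3)] pos_inj[OF ev(2) ev(4)] ep ep' eq True unfolding endpos_def by auto
      hence "e = f" by (simp add: prod_eq_iff)
      thus ?thesis using ne by simp
    next
      case False
      have kF2: "k' \<in> fset (ftype_of j)" using kF' eq by simp
      have eqX: "B.rX k h = B.rX k' h" using h(3) eq unfolding GRX_def by simp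
      have inr2: "B.inr k' h" using inr' eq by simp
      from B.ok2_frame[OF kF kF2 False] show ?thesis
      proof
        assume "B.ok2 k k'"
        hence "h = B.ly (src k) \<or> h = B.ly (dst k)" using inr inr2 eqX unfolding B.ok2_def by blast
        thus ?thesis
        proof
          assume hh: "h = B.ly (src k)"
          show ?thesis using ev(1) ep hh B.rX_src unfolding endpos_def GRX_def GLX_def GLY_def yr_def by (intro exI[of _ "fst e"]) auto
        next
          assume hh: "h = B.ly (dst k)"
          show ?thesis using ev(2) ep hh B.rX_dst unfolding endpos_def GRX_def GLX_def GLY_def yr_def by (intro exI[of _ "snd e"]) auto
        qed
      next
        assume "B.ok2 k' k"
        hence "h = B.ly (src k') \<or> h = B.ly (dst k')" using inr inr2 eqX unfolding B.ok2_def by metis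
        thus ?thesis
        proof
          assume hh: "h = B.ly (src k')"
          show ?thesis using ev(3) ep' hh B.rX_src eq eqX unfolding endpos_def GRX_def GLX_def GLY_def yr_def by (intro exI[of _ "fst f"]) auto
        next
          assume hh: "h = B.ly (dst k')"
          show ?thesis using ev(4) ep' hh B.rX_dst eq eqX unfolding endpos_def GRX_def GLX_def GLY_def yr_def by (intro exI[of _ "snd f"]) auto
        qed
      qed
    qed
  next
    case s1
    have N: "Suc j < NN" using jN' s1 by simp
    have xs: "rxL j' = rxL j + 4" "rxR j' = rxR j - 4" "ryB j' = ryB j + hr" "ryT j' = ryT j - hr"
      using s1 unfolding rxL_def rxR_def ryB_def ryT_def by (auto simp: algebra_simps)
    have "B.rX k h = rxL j + 4 \<or> (B.rX k h = B.lx qR \<and> h = B.ly qR) \<or> (B.rX k h = B.lx qC \<and> h = B.ly qC)"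
      by (rule B.LB_frame[OF kF ftype_inner[OF N] inr]) (use LA' xs h(3) in \<open>auto simp: GRX_def\<close>)
    thus ?thesis
    proof (elim disjE)
      assume a: "B.rX k h = rxL j + 4"
      have "B'.rX k' h \<le> rxL j'" using a xs h(3) unfolding GRX_def by simp
      from B'.LC_all[OF inr' this] have hh: "h = B'.ly pL" by simp
      have "B'.rX k' h = B'.lx pL" using a xs h(3) B'.lx.simps unfolding GRX_def by simp
      thus ?thesis using pos_gv[OF jN', of pL] gv_props[OF jN', of pL] hh h(3)
        unfolding GRX_def GLX_def GLY_def yr_def by (intro exI[of _ "gv j' pL"]) auto
    next
      assume a: "B.rX k h = B.lx qR \<and> h = B.ly qR"
      thus ?thesis using pos_gv[OF jN', of pR] gv_props[OF jN', of pR] inner_pts[OF N] s1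
        unfolding GRX_def GLX_def GLY_def yr_def by (intro exI[of _ "gv j' pR"]) auto
    next
      assume a: "B.rX k h = B.lx qC \<and> h = B.ly qC"
      thus ?thesis using pos_gv[OF jN', of pC] gv_props[OF jN', of pC] inner_pts[OF N] s1
        unfolding GRX_def GLX_def GLY_def yr_def by (intro exI[of _ "gv j' pC"]) auto
    qed
  next
    case s2
    have N: "Suc j < NN" using jN' s2 by simp
    have bs: "rxL j + 4 * real 2 \<le> rxL j' \<and> rxR j' \<le> rxR j - 4 * real 2 \<and> ryB j + real 2 * hr \<le> ryB j' \<and> ryT j' \<le> ryT j - real 2 * hr"
      by (rule box_sub) (use s2 jN' in auto)
    have "B.rX k h = rxL j + 4 \<or> (B.rX k h = B.lx qR \<and> h = B.ly qR) \<or> (B.rX k h = B.lx qC \<and> h = B.ly qC)"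
      by (rule B.LB_frame[OF kF ftype_inner[OF N] inr]) (use LA' bs h(3) hr_pos in \<open>auto simp: GRX_def\<close>)
    thus ?thesis using LA' bs h(3) B.lx.simps unfolding GRX_def by auto
  qed
qed


definition hgt :: "nat \<times> nat \<Rightarrow> real \<Rightarrow> real" where "hgt e t = yr (fst e) + t * (yr (snd e) - yr (fst e))"
definition cdr :: "nat \<times> nat \<Rightarrow> real \<Rightarrow> real \<times> real" where
  "cdr e t = (GRX (fst (ek e)) (snd (ek e)) (hgt e t), hgt e t)"

lemma edge_facts: assumes e: "e \<in> E" and jk: "ek e = (j, k)"
  shows "yr (fst e) = GLY j (src k)" "yr (snd e) = GLY j (dst k)" "xpos (fst e) = GLX j (src k)" "xpos (snd e) = GLX j (dst k)"
    "GLY j (src k) < GLY j (dst k)" "GRX j k (GLY j (src k)) = GLX j (src k)" "GRX j k (GLY j (dst k)) = GLX j (dst k)"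
    "continuous_on A (GRX j k)" "Ginr j k h \<longleftrightarrow> GLY j (src k) \<le> h \<and> h \<le> GLY j (dst k)"
proof -
  have EKe: "EK e j k" using ek[OF e] jk by simp
  have jN: "j < NN" and ep: "endpos e j k" using EK_props[OF EKe] by auto
  interpret B: box "rxL j" "rxR j" "ryB j" "ryT j" hr by (rule box_j[OF jN])
  show "yr (fst e) = GLY j (src k)" "yr (snd e) = GLY j (dst k)" "xpos (fst e) = GLX j (src k)" "xpos (snd e) = GLX j (dst k)"
    using ep unfolding endpos_def yr_def by auto
  show "GLY j (src k) < GLY j (dst k)" using B.src_dst unfolding GLY_def .
  show "GRX j k (GLY j (src k)) = GLX j (src k)" "GRX j k (GLY j (dst k)) = GLX j (dst k)"
    using B.rX_src B.rX_dst unfolding GRX_def GLX_def GLY_def by auto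
  show "continuous_on A (GRX j k)" unfolding GRX_def by (rule B.rX_cont)
  show "Ginr j k h \<longleftrightarrow> GLY j (src k) \<le> h \<and> h \<le> GLY j (dst k)" unfolding Ginr_def B.inr_def GLY_def ..
qed

lemma interp_bounds: fixes a b s :: real assumes "a \<le> b" "0 \<le> s" "s \<le> 1"
  shows "a \<le> a + s * (b - a) \<and> a + s * (b - a) \<le> b"
proof -
  have "0 \<le> s * (b - a)" using assms by simp
  moreover have "s * (b - a) \<le> 1 * (b - a)" by (rule mult_right_mono) (use assms in auto)
  ultimately show ?thesis by simp
qed

lemma drawing_ok: "upward_planar_layered_drawing V E xpos yposi cdr"
proof -
  have P: "updraw_point xpos yposi v = (xpos v, yr v)" for v unfolding updraw_point_def yr_def by simp
  have A: "inj_on (updraw_point xpos yposi) V"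
    unfolding inj_on_def P using pos_inj unfolding yr_def by blast
  have B: "continuous_on {0..1} (cdr e) \<and> cdr e 0 = updraw_point xpos yposi (fst e) \<and> cdr e 1 = updraw_point xpos yposi (snd e) \<and>
        (\<forall>s t. 0 \<le> s \<longrightarrow> s < t \<longrightarrow> t \<le> 1 \<longrightarrow> snd (cdr e s) < snd (cdr e t))" if e: "e \<in> E" for e
  proof -
    obtain j k where jk: "ek e = (j, k)" by (cases "ek e") auto
    note F = edge_facts[OF e jk]
    have c1: "continuous_on {0..1} (hgt e)" unfolding hgt_def by (intro continuous_intros)
    have c2: "continuous_on {0..1} (\<lambda>t. GRX j k (hgt e t))"
      by (rule continuous_on_compose2[OF F(8)[of UNIV] c1]) auto
    have "continuous_on {0..1} (\<lambda>t. (GRX j k (hgt e t), hgt e t))" by (intro continuous_on_Pair c2 c1)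
    moreover have "cdr e = (\<lambda>t. (GRX j k (hgt e t), hgt e t))" unfolding cdr_def jk by auto
    moreover have "hgt e 0 = yr (fst e)" "hgt e 1 = yr (snd e)" unfolding hgt_def by simp_all
    moreover have "hgt e s < hgt e t" if "s < t" for s t
      using F(1,2,5) that unfolding hgt_def by (simp add: mult_strict_right_mono)
    ultimately show ?thesis using F P by auto
  qed
  have C: "cdr e t \<noteq> updraw_point xpos yposi w" if e: "e \<in> E" and t: "0 < t" "t < 1" and w: "w \<in> V" for e t w
  proof
    assume eq: "cdr e t = updraw_point xpos yposi w"
    obtain j k where jk: "ek e = (j, k)" by (cases "ek e") auto
    note F = edge_facts[OF e jk]
    have d: "0 < yr (snd e) - yr (fst e)" using F(1,2,5) by simp
    have m1: "0 < t * (yr (snd e) - yr (fst e))" using t d by simp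
    have m2: "t * (yr (snd e) - yr (fst e)) < 1 * (yr (snd e) - yr (fst e))"
      by (rule mult_strict_right_mono) (use t d in auto)
    have hl: "yr (fst e) < hgt e t" "hgt e t < yr (snd e)"
      using m1 m2 unfolding hgt_def by (simp_all add: algebra_simps)
    have ins: "Ginr j k (hgt e t)" using F(9) F(1,2) hl by auto
    have eq2: "GRX j k (hgt e t) = xpos w" "hgt e t = yr w" using eq unfolding cdr_def jk P by auto
    from G1[OF e w jk ins eq2] have "w = fst e \<or> w = snd e" .
    thus False using hl eq2(2) by auto
  qed
  have D: "\<exists>w. (w = fst e \<or> w = snd e) \<and> (w = fst f \<or> w = snd f) \<and> cdr e s = updraw_point xpos yposi w"
    if e: "e \<in> E" and f: "f \<in> E" and ne: "e \<noteq> f" and st: "0 \<le> s" "s \<le> 1" "0 \<le> t" "t \<le> 1" and eq: "cdr e s = cdr f t"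
    for e f s t
  proof -
    obtain j k where jk: "ek e = (j, k)" by (cases "ek e") auto
    obtain j' k' where jk': "ek f = (j', k')" by (cases "ek f") auto
    note F = edge_facts[OF e jk] and F' = edge_facts[OF f jk']
    define h where "h = hgt e s"
    have hf: "hgt f t = h" using eq unfolding cdr_def h_def by (simp add: prod_eq_iff)
    have xe: "GRX j k h = GRX j' k' h" using eq hf unfolding cdr_def h_def jk jk' by (simp add: prod_eq_iff)
    have ie: "Ginr j k h"
    proof -
      have ib: "yr (fst e) \<le> yr (fst e) + s * (yr (snd e) - yr (fst e)) \<and> yr (fst e) + s * (yr (snd e) - yr (fst e)) \<le> yr (snd e)"
        by (rule interp_bounds) (use F(1,2,5) st in auto)
      have "yr (fst e) \<le> h \<and> h \<le> yr (snd e)" using ib unfolding h_def hgt_def by blast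
      thus ?thesis using F(9) F(1,2) by auto
    qed
    have if': "Ginr j' k' h"
    proof -
      have ib: "yr (fst f) \<le> yr (fst f) + t * (yr (snd f) - yr (fst f)) \<and> yr (fst f) + t * (yr (snd f) - yr (fst f)) \<le> yr (snd f)"
        by (rule interp_bounds) (use F'(1,2,5) st in auto)
      have "yr (fst f) \<le> h \<and> h \<le> yr (snd f)" using ib hf unfolding hgt_def by blast
      thus ?thesis using F'(9) F'(1,2) by auto
    qed
    have "\<exists>w. w \<in> V \<and> xpos w = GRX j k h \<and> yr w = h"
    proof (cases "j \<le> j'")
      case True show ?thesis using G2a[OF e f ne jk jk' True ie if' xe] by blast
    next
      case False
      hence "j' \<le> j" by simp
      from G2a[OF f e ne[symmetric] jk' jk this if' ie xe[symmetric]] show ?thesis using xe by simp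
    qed
    then obtain w where w: "w \<in> V" "xpos w = GRX j k h" "yr w = h" by blast
    have we: "w = fst e \<or> w = snd e" using G1[OF e w(1) jk ie w(2)[symmetric] w(3)[symmetric]] .
    have xf: "GRX j' k' h = xpos w" using xe w(2) by simp
    have wf: "w = fst f \<or> w = snd f" using G1[OF f w(1) jk' if' xf w(3)[symmetric]] .
    have c1: "cdr e s = (GRX j k h, h)" unfolding cdr_def jk h_def by simp
    have c2: "updraw_point xpos yposi w = (GRX j k h, h)" unfolding P using w(2,3) by simp
    show ?thesis using we wf c1 c2 by metis
  qed
  show ?thesis unfolding upward_planar_layered_drawing_def
  proof (intro conjI)
    show "inj_on (updraw_point xpos yposi) V" by (rule A)
    show "\<forall>e\<in>E. continuous_on {0..1} (cdr e) \<and> cdr e 0 = updraw_point xpos yposi (fst e) \<and>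
        cdr e 1 = updraw_point xpos yposi (snd e) \<and> (\<forall>s t. 0 \<le> s \<longrightarrow> s < t \<longrightarrow> t \<le> 1 \<longrightarrow> snd (cdr e s) < snd (cdr e t))"
      using B by blast
    show "\<forall>e\<in>E. \<forall>t. 0 < t \<longrightarrow> t < 1 \<longrightarrow> (\<forall>w\<in>V. cdr e t \<noteq> updraw_point xpos yposi w)"
      using C by blast
    show "\<forall>e\<in>E. \<forall>f\<in>E. e \<noteq> f \<longrightarrow> (\<forall>s t. 0 \<le> s \<longrightarrow> s \<le> 1 \<longrightarrow> 0 \<le> t \<longrightarrow> t \<le> 1 \<longrightarrow>
        cdr e s = cdr f t \<longrightarrow> (\<exists>w. (w = fst e \<or> w = snd e) \<and> (w = fst f \<or> w = snd f) \<and>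
             cdr e s = updraw_point xpos yposi w))"
      using D by blast
  qed
qed

lemma upward: "upward_planar V E"
  unfolding upward_planar_def using drawing_ok by blast


lemma span_nonneg: "0 \<le> drawing_span E y"
proof -
  have fin: "finite E" using finite_subset[OF E_sub] finV by auto
  show ?thesis unfolding drawing_span_def by (rule Max_ge) (use fin in auto)
qed

lemma gspan_bound: "int (graph_span V E) \<ge> (if L = 0 then 2 else int L + 1)"
proof -
  let ?P = "\<lambda>k::nat. \<exists>xp y c. upward_planar_layered_drawing V E xp y c \<and> drawing_span E y = int k"
  have "?P (nat (drawing_span E yposi))" using drawing_ok span_nonneg[of yposi] by auto
  hence "?P (LEAST k. ?P k)" by (rule LeastI)
  then obtain xp y c where d: "upward_planar_layered_drawing V E xp y c" "drawing_span E y = int (LEAST k. ?P k)" by blast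
  have "graph_span V E = (LEAST k. ?P k)" unfolding graph_span_def ..
  thus ?thesis using span_lower[OF d(1)] d(2) by simp
qed

end



theorem mainTheorem2:
  fixes n :: nat
  assumes "n \<ge> 1"
  shows "\<exists>(V :: nat set) (E :: (nat \<times> nat) set).
           is_dag V E \<and> card V = 3 * n \<and> three_connected V E \<and>
           upward_planar V E \<and>
           (\<forall>v\<in>V. degree E v \<le> 4) \<and>
           (\<forall>xs. dir_path V E xs \<longrightarrow> length xs - 1 \<le> 5) \<and>
           real (graph_span V E) \<ge> real n / 2"
proof -
  define q where "q = (n - 1) div 4"
  define L where "L = 3 * q"
  define T where "T = n - 4 * q"
  have q4: "4 * q \<le> n - 1" "n - 1 < 4 * q + 4" unfolding q_def by auto
  have T1: "1 \<le> T" using assms q4 unfolding T_def by auto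
  interpret F: fam T L using T1 by unfold_locales
  have card: "card F.V = 3 * n" using F.cardV q4 assms unfolding T_def L_def by auto
  have gs: "int (graph_span F.V F.E) \<ge> (if L = 0 then 2 else int L + 1)" by (rule F.gspan_bound)
  have span: "real (graph_span F.V F.E) \<ge> real n / 2"
  proof (cases "q = 0")
    case True
    hence "n \<le> 4" using q4 by auto
    moreover have "graph_span F.V F.E \<ge> 2" using gs True unfolding L_def by simp
    ultimately show ?thesis by simp
  next
    case False
    hence "graph_span F.V F.E \<ge> 3 * q + 1" using gs unfolding L_def by simp
    moreover have "n \<le> 4 * q + 4" using q4 by simp
    ultimately show ?thesis using False by simp
  qed
  show ?thesis
    by (intro exI[of _ F.V] exI[of _ F.E]) (use F.is_dag card F.three_conn F.upward F.degree4 F.path_len span in auto)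
qed


end
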